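(* Let $n\ge 1$ and let $d_1^+,\dots,d_n^+$ and $d_1^-,\dots,d_n^-$ be sequences of non-negative integers (in-degrees and out-degrees, respectively), and put $d_j=d_j^++d_j^-$. 1) Let $G$ be the random directed graph on $[n]$ given by the directed random configuration model with in-degrees $d_1^+,\dots,d_n^+$ and out-degrees $d_1^-,\dots,d_n^-$. Then for every $\varepsilon>0$, $$\mathbb{P}\big(|m(G)-\mathbb{E}(m(G))|>\varepsilon\big)\le 2\exp\Big\{-\frac{\varepsilon^2n^2}{8\sum_{k=1}^n d_k^2}\Big\}.$$ 2) Let $G$ be the random directed graph on $[n]$ given by the random configuration model with total degrees $d_1,\dots,d_n$ and independently uniformly oriented edges. Then for every $\varepsilon>0$, $$\mathbb{P}\big(|m(G)-\mathbb{E}(m(G))|>\varepsilon\big)\le 2\exp\Big\{-\frac{\varepsilon^2n^2}{32\sum_{k=1}^n d_k^2}\Big\}.$$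
   Context: Graphs may have multiple edges and loops. A directed matching of a directed graph $G$ is a set $M$ of edges such that every vertex has in-degree at most one and out-degree at most one in the subgraph formed by $M$. The directed matching ratio of a finite directed graph $G$ is $m(G)=|M_{\max}(G)|/|V(G)|$, where $M_{\max}(G)$ is a directed matching of maximum size. Directed configuration model with prescribed in/out-degrees: vertex $k\in[n]$ receives $d_k^-$ tail-type half-edges and $d_k^+$ head-type half-edges (assuming $\sum_k d_k^-=\sum_k d_k^+$); a uniformly random bijection between the set of tail-type half-edges and the set of head-type half-edges is chosen, and each matched pair (tail half-edge at $u$, head half-edge at $v$) gives a directed edge $(u,v)$. Configuration model with prescribed total degrees: vertex $k$ receives $d_k$ half-edges; if the total number of half-edges is odd, one uniformly chosen half-edge is discarded; a uniformly random perfect matching of the half-edges is chosen, each matched pair giving an edge; then each edge is given one of its two orientations uniformly at random, independently of the others. *)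

theory Defs
  imports "HOL-Probability.Probability"
begin

text \<open>Directed multigraphs on the vertex set {0..<n} are represented by the
multiset of their directed edges (u,v); loops and multiple edges are allowed.\<close>

definition directed_matching :: "(nat \<times> nat) multiset \<Rightarrow> bool" where
  "directed_matching M \<longleftrightarrow>
     (\<forall>v. size (filter_mset (\<lambda>e. fst e = v) M) \<le> 1 \<and>
          size (filter_mset (\<lambda>e. snd e = v) M) \<le> 1)"

definition max_dmatching_size :: "(nat \<times> nat) multiset \<Rightarrow> nat" where
  "max_dmatching_size G = Max {size M | M. M \<subseteq># G \<and> directed_matching M}"

definition dmatching_ratio :: "nat \<Rightarrow> (nat \<times> nat) multiset \<Rightarrow> real" where
  "dmatching_ratio n G = real (max_dmatching_size G) / real n"

definition half_edges :: "nat \<Rightarrow> (nat \<Rightarrow> nat) \<Rightarrow> (nat \<times> nat) set" where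
  "half_edges n d = {(k, i). k < n \<and> i < d k}"

text \<open>Directed configuration model: din = in-degrees (head half-edges),
dout = out-degrees (tail half-edges); uniform bijection tails -> heads.\<close>
definition directed_config_model ::
  "nat \<Rightarrow> (nat \<Rightarrow> nat) \<Rightarrow> (nat \<Rightarrow> nat) \<Rightarrow> (nat \<times> nat) multiset pmf" where
  "directed_config_model n din dout =
     map_pmf (\<lambda>f. image_mset (\<lambda>t. (fst t, fst (f t))) (mset_set (half_edges n dout)))
       (pmf_of_set {f \<in> half_edges n dout \<rightarrow>\<^sub>E half_edges n din.
                      bij_betw f (half_edges n dout) (half_edges n din)})"

definition perfect_matchings :: "'a set \<Rightarrow> 'a set set set" where
  "perfect_matchings S =
     {P. (\<forall>e\<in>P. e \<subseteq> S \<and> card e = 2) \<and> (\<forall>x\<in>S. \<exists>!e. e \<in> P \<and> x \<in> e)}"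

text \<open>Orientations of a matching: for each edge choose the half-edge that becomes
the tail; the uniform distribution on these is independent fair orientation.\<close>
definition orientations :: "'a set set \<Rightarrow> ('a set \<Rightarrow> 'a) set" where
  "orientations P = {\<omega> \<in> P \<rightarrow>\<^sub>E \<Union>P. \<forall>e\<in>P. \<omega> e \<in> e}"

definition oriented_edge ::
  "((nat \<times> nat) set \<Rightarrow> nat \<times> nat) \<Rightarrow> (nat \<times> nat) set \<Rightarrow> nat \<times> nat" where
  "oriented_edge \<omega> e = (fst (\<omega> e), fst (the_elem (e - {\<omega> e})))"

definition oriented_config_model ::
  "nat \<Rightarrow> (nat \<Rightarrow> nat) \<Rightarrow> (nat \<times> nat) multiset pmf" where
  "oriented_config_model n d =
     (let H = half_edges n d in
      bind_pmf (if even (card H) then return_pmf H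
                else map_pmf (\<lambda>h. H - {h}) (pmf_of_set H)) (\<lambda>S.
      bind_pmf (pmf_of_set (perfect_matchings S)) (\<lambda>P.
      map_pmf (\<lambda>\<omega>. image_mset (oriented_edge \<omega>) (mset_set P))
        (pmf_of_set (orientations P)))))"

end

theory Submission
  imports Defs "HOL-Combinatorics.Transposition"
begin


definition mgfb :: "'a pmf \<Rightarrow> ('a \<Rightarrow> real) \<Rightarrow> real \<Rightarrow> bool" where
  "mgfb p f s \<longleftrightarrow> finite (set_pmf p) \<and>
     (\<forall>l. measure_pmf.expectation p (\<lambda>x. exp (l * (f x - measure_pmf.expectation p f)))
           \<le> exp (l\<^sup>2 * s / 8))"

lemma hoeff_pos:
  fixes q :: "'a pmf" and g :: "'a \<Rightarrow> real"
  assumes fin: "finite (set_pmf q)" and rng: "\<And>x. x \<in> set_pmf q \<Longrightarrow> g x \<in> {a..b}" and l: "l > 0"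
  shows "measure_pmf.expectation q (\<lambda>x. exp (l * (g x - measure_pmf.expectation q g)))
           \<le> exp (l\<^sup>2 * (b - a)\<^sup>2 / 8)"
proof -
  interpret interval_bounded_random_variable "measure_pmf q" g a b
  proof
    show "g \<in> borel_measurable (measure_pmf q)" by simp
    show "AE x in measure_pmf q. g x \<in> {a..b}" using rng by (simp add: AE_measure_pmf_iff)
  qed
  have "nn_integral (measure_pmf q) (\<lambda>x. exp (l * (g x - measure_pmf.expectation q g)))
        \<le> ennreal (exp (l\<^sup>2 * (b - a)\<^sup>2 / 8))"
    using Hoeffdings_lemma_nn_integral[OF l] by simp
  moreover have "nn_integral (measure_pmf q) (\<lambda>x. exp (l * (g x - measure_pmf.expectation q g)))
     = ennreal (measure_pmf.expectation q (\<lambda>x. exp (l * (g x - measure_pmf.expectation q g))))"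
    by (intro nn_integral_eq_integral integrable_measure_pmf_finite fin) auto
  ultimately show ?thesis by (simp add: ennreal_le_iff)
qed

lemma mgfb_range:
  fixes q :: "'a pmf" and g :: "'a \<Rightarrow> real"
  assumes fin: "finite (set_pmf q)" and c: "\<And>x y. x \<in> set_pmf q \<Longrightarrow> y \<in> set_pmf q \<Longrightarrow> g x - g y \<le> c"
  shows "mgfb q g (c\<^sup>2)"
proof -
  define a where "a = Min (g ` set_pmf q)"
  have ne: "set_pmf q \<noteq> {}" by (rule set_pmf_not_empty)
  have rng: "g x \<in> {a..a+c}" if "x \<in> set_pmf q" for x
  proof -
    have "a \<in> g ` set_pmf q" unfolding a_def using fin ne by (intro Min_in) auto
    then obtain y where y: "y \<in> set_pmf q" "a = g y" by auto
    have "a \<le> g x" unfolding a_def using fin that by (intro Min_le) auto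
    moreover have "g x \<le> a + c" using c[OF that y(1)] y by simp
    ultimately show ?thesis by simp
  qed
  have rng2: "- g x \<in> {-(a+c)..-a}" if "x \<in> set_pmf q" for x using rng[OF that] by simp
  have "measure_pmf.expectation q (\<lambda>x. exp (l * (g x - measure_pmf.expectation q g))) \<le> exp (l\<^sup>2 * c\<^sup>2 / 8)" for l
  proof (cases "l > 0")
    case True
    show ?thesis using hoeff_pos[OF fin rng True] by simp
  next
    case False
    show ?thesis
    proof (cases "l = 0")
      case True then show ?thesis by simp
    next
      case False
      then have l': "-l > 0" using \<open>\<not> l > 0\<close> by simp
      have "measure_pmf.expectation q (\<lambda>x. exp (-l * (- g x - measure_pmf.expectation q (\<lambda>x. - g x))))
          \<le> exp ((-l)\<^sup>2 * (-a - -(a+c))\<^sup>2 / 8)"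
        by (rule hoeff_pos[OF fin rng2 l'])
      then show ?thesis by (simp add: algebra_simps)
    qed
  qed
  then show ?thesis using fin unfolding mgfb_def by (simp add: power_mult_distrib)
qed

lemma mgfb_mono: "mgfb p f s \<Longrightarrow> s \<le> s' \<Longrightarrow> mgfb p f s'"
  unfolding mgfb_def
proof (intro conjI allI; (elim conjE)?)
  fix l assume h: "\<forall>l. measure_pmf.expectation p (\<lambda>x. exp (l * (f x - measure_pmf.expectation p f))) \<le> exp (l\<^sup>2 * s / 8)"
    and ss: "s \<le> s'"
  have "l\<^sup>2 * s \<le> l\<^sup>2 * s'" using ss by (intro mult_left_mono) auto
  then have "exp (l\<^sup>2 * s / 8) \<le> exp (l\<^sup>2 * s' / 8)" by simp
  with h show "measure_pmf.expectation p (\<lambda>x. exp (l * (f x - measure_pmf.expectation p f))) \<le> exp (l\<^sup>2 * s' / 8)"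
    by (meson order.trans)
qed

lemma mgfb_map: "mgfb p (f \<circ> h) s \<Longrightarrow> mgfb (map_pmf h p) f s"
  unfolding mgfb_def by (simp add: integral_map_pmf o_def)

lemma mgfb_const:
  assumes "finite (set_pmf p)" "\<And>x. x \<in> set_pmf p \<Longrightarrow> f x = k"
  shows "mgfb p f 0"
proof -
  have e: "measure_pmf.expectation p f = k"
    using assms by (subst integral_cong_AE[where g = "\<lambda>_. k"]) (auto simp: AE_measure_pmf_iff)
  have "measure_pmf.expectation p (\<lambda>x. exp (l * (f x - k))) = 1" for l
    using assms by (subst integral_cong_AE[where g = "\<lambda>_. 1"]) (auto simp: AE_measure_pmf_iff)
  then show ?thesis using assms(1) unfolding mgfb_def e by simp
qed

lemma exp_pmf_sum:
  fixes f :: "'a \<Rightarrow> real"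
  assumes "finite (set_pmf p)"
  shows "measure_pmf.expectation p f = (\<Sum>a\<in>set_pmf p. pmf p a * f a)"
  using assms by (subst integral_measure_pmf_real[of "set_pmf p"]) (auto simp: mult.commute)

lemma mgfb_bind:
  fixes q :: "'a pmf" and r :: "'a \<Rightarrow> 'b pmf" and f :: "'b \<Rightarrow> real"
  assumes finq: "finite (set_pmf q)"
    and inner: "\<And>x. x \<in> set_pmf q \<Longrightarrow> mgfb (r x) f s1"
    and outer: "mgfb q (\<lambda>x. measure_pmf.expectation (r x) f) s2"
  shows "mgfb (bind_pmf q r) f (s1 + s2)"
proof -
  define g where "g x = measure_pmf.expectation (r x) f" for x
  define \<mu> where "\<mu> = measure_pmf.expectation q g"
  have finr: "finite (set_pmf (r x))" if "x \<in> set_pmf q" for x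
    using inner[OF that] unfolding mgfb_def by simp
  have finb: "finite (set_pmf (bind_pmf q r))" using finq finr by simp
  have E: "measure_pmf.expectation (bind_pmf q r) h = (\<Sum>a\<in>set_pmf q. pmf q a * measure_pmf.expectation (r a) h)"
    for h :: "'b \<Rightarrow> real"
    by (subst pmf_expectation_bind[of "set_pmf q"]) (use finq finr in auto)
  have Ef: "measure_pmf.expectation (bind_pmf q r) f = \<mu>"
    unfolding E \<mu>_def g_def using finq by (simp add: exp_pmf_sum)
  have "measure_pmf.expectation (bind_pmf q r) (\<lambda>x. exp (l * (f x - \<mu>))) \<le> exp (l\<^sup>2 * (s1 + s2) / 8)" for l
  proof -
    have step: "measure_pmf.expectation (r a) (\<lambda>x. exp (l * (f x - \<mu>)))
        \<le> exp (l\<^sup>2 * s1 / 8) * exp (l * (g a - \<mu>))" if a: "a \<in> set_pmf q" for a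
    proof -
      have "measure_pmf.expectation (r a) (\<lambda>x. exp (l * (f x - \<mu>)))
         = measure_pmf.expectation (r a) (\<lambda>x. exp (l * (f x - g a)) * exp (l * (g a - \<mu>)))"
        by (simp add: exp_add[symmetric] algebra_simps)
      also have "\<dots> = measure_pmf.expectation (r a) (\<lambda>x. exp (l * (f x - g a))) * exp (l * (g a - \<mu>))"
        by simp
      also have "\<dots> \<le> exp (l\<^sup>2 * s1 / 8) * exp (l * (g a - \<mu>))"
        using inner[OF a] unfolding mgfb_def g_def by (intro mult_right_mono) auto
      finally show ?thesis .
    qed
    have "measure_pmf.expectation (bind_pmf q r) (\<lambda>x. exp (l * (f x - \<mu>)))
        = (\<Sum>a\<in>set_pmf q. pmf q a * measure_pmf.expectation (r a) (\<lambda>x. exp (l * (f x - \<mu>))))"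
      by (rule E)
    also have "\<dots> \<le> (\<Sum>a\<in>set_pmf q. pmf q a * (exp (l\<^sup>2 * s1 / 8) * exp (l * (g a - \<mu>))))"
      by (intro sum_mono mult_left_mono step) auto
    also have "\<dots> = exp (l\<^sup>2 * s1 / 8) * (\<Sum>a\<in>set_pmf q. pmf q a * exp (l * (g a - \<mu>)))"
      by (simp add: sum_distrib_left algebra_simps)
    also have "(\<Sum>a\<in>set_pmf q. pmf q a * exp (l * (g a - \<mu>))) = measure_pmf.expectation q (\<lambda>a. exp (l * (g a - \<mu>)))"
      using finq by (simp add: exp_pmf_sum)
    also have "\<dots> \<le> exp (l\<^sup>2 * s2 / 8)"
      using outer unfolding mgfb_def \<mu>_def g_def by auto
    finally show ?thesis by (simp add: exp_add[symmetric] algebra_simps add_divide_distrib)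
  qed
  then show ?thesis unfolding mgfb_def Ef using finb by simp
qed

lemma coupling_avg:
  fixes f g :: "'a \<Rightarrow> real"
  assumes bij: "bij_betw \<sigma> A B" and fin: "finite A" and ne: "A \<noteq> {}"
    and c: "\<And>a. a \<in> A \<Longrightarrow> \<bar>f a - g (\<sigma> a)\<bar> \<le> c"
  shows "\<bar>measure_pmf.expectation (pmf_of_set A) f - measure_pmf.expectation (pmf_of_set B) g\<bar> \<le> c"
proof -
  have finB: "finite B" using bij fin bij_betw_finite by blast
  have cardB: "card B = card A" using bij_betw_same_card[OF bij] by simp
  have neB: "B \<noteq> {}" using cardB fin ne finB by auto
  have sB: "sum g B = (\<Sum>a\<in>A. g (\<sigma> a))"
    using sum.reindex_bij_betw[OF bij, of g] by simp
  have cpos: "card A > 0" using fin ne by (simp add: card_gt_0_iff)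
  have "\<bar>sum f A - sum g B\<bar> = \<bar>\<Sum>a\<in>A. f a - g (\<sigma> a)\<bar>" by (simp add: sB sum_subtractf)
  also have "\<dots> \<le> (\<Sum>a\<in>A. \<bar>f a - g (\<sigma> a)\<bar>)" by (rule sum_abs)
  also have "\<dots> \<le> (\<Sum>a\<in>A. c)" by (intro sum_mono c)
  finally have "\<bar>sum f A - sum g B\<bar> \<le> card A * c" by simp
  then have "\<bar>sum f A - sum g B\<bar> / card A \<le> c" using cpos by (simp add: divide_le_eq mult.commute)
  then show ?thesis using fin ne finB neB
    by (simp add: integral_pmf_of_set cardB diff_divide_distrib[symmetric])
qed

lemma mgfb_partition:
  fixes A :: "'a set" and f :: "'a \<Rightarrow> real" and \<phi> :: "'a \<Rightarrow> 'b"
  assumes fin: "finite A" and ne: "A \<noteq> {}"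
    and IH: "\<And>v. v \<in> \<phi> ` A \<Longrightarrow> mgfb (pmf_of_set {a\<in>A. \<phi> a = v}) f s"
    and cpl: "\<And>v v'. v \<in> \<phi> ` A \<Longrightarrow> v' \<in> \<phi> ` A \<Longrightarrow>
        \<exists>\<sigma>. bij_betw \<sigma> {a\<in>A. \<phi> a = v} {a\<in>A. \<phi> a = v'} \<and>
             (\<forall>a\<in>{a\<in>A. \<phi> a = v}. \<bar>f a - f (\<sigma> a)\<bar> \<le> c)"
  shows "mgfb (pmf_of_set A) f (s + c\<^sup>2)"
proof -
  define V where "V = \<phi> ` A"
  define fib where "fib v = {a\<in>A. \<phi> a = v}" for v
  have finV: "finite V" using fin by (simp add: V_def)
  have neV: "V \<noteq> {}" using ne by (simp add: V_def)
  have fibne: "fib v \<noteq> {}" if "v \<in> V" for v using that by (auto simp: V_def fib_def)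
  have finfib: "finite (fib v)" for v using fin by (simp add: fib_def)
  obtain v0 where v0: "v0 \<in> V" using neV by auto
  have cards: "card (fib v) = card (fib v0)" if "v \<in> V" for v
  proof -
    from cpl[of v v0] that v0 have "\<exists>\<sigma>. bij_betw \<sigma> (fib v) (fib v0)" unfolding V_def fib_def by blast
    then show ?thesis using bij_betw_same_card by blast
  qed
  have AU: "A = \<Union> (fib ` V)" by (auto simp: V_def fib_def)
  have "pmf_of_set (\<Union> (fib ` V)) = pmf_of_set V \<bind> (\<lambda>v. pmf_of_set (fib v))"
    by (rule pmf_of_set_UN[where n = "card (fib v0)"])
       (use fin finV neV fibne cards in \<open>auto simp: AU[symmetric] disjoint_family_on_def fib_def\<close>)
  then have eq: "pmf_of_set A = pmf_of_set V \<bind> (\<lambda>v. pmf_of_set (fib v))" using AU by simp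
  have "mgfb (pmf_of_set V \<bind> (\<lambda>v. pmf_of_set (fib v))) f (s + c\<^sup>2)"
  proof (rule mgfb_bind)
    show "finite (set_pmf (pmf_of_set V))" using finV neV by simp
    show "mgfb (pmf_of_set (fib x)) f s" if "x \<in> set_pmf (pmf_of_set V)" for x
      using IH that finV neV by (simp add: V_def fib_def)
    show "mgfb (pmf_of_set V) (\<lambda>x. measure_pmf.expectation (pmf_of_set (fib x)) f) (c\<^sup>2)"
    proof (rule mgfb_range)
      show "finite (set_pmf (pmf_of_set V))" using finV neV by simp
      fix x y assume xy: "x \<in> set_pmf (pmf_of_set V)" "y \<in> set_pmf (pmf_of_set V)"
      then have xy': "x \<in> V" "y \<in> V" using finV neV by auto
      obtain \<sigma> where \<sigma>: "bij_betw \<sigma> (fib x) (fib y)" "\<forall>a\<in>fib x. \<bar>f a - f (\<sigma> a)\<bar> \<le> c"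
        using cpl[of x y] xy' by (auto simp: V_def fib_def)
      have "\<bar>measure_pmf.expectation (pmf_of_set (fib x)) f - measure_pmf.expectation (pmf_of_set (fib y)) f\<bar> \<le> c"
        by (rule coupling_avg[OF \<sigma>(1) finfib fibne[OF xy'(1)]]) (use \<sigma>(2) in auto)
      then show "measure_pmf.expectation (pmf_of_set (fib x)) f - measure_pmf.expectation (pmf_of_set (fib y)) f \<le> c"
        by linarith
    qed
  qed
  then show ?thesis using eq by simp
qed

lemma markov_exp:
  fixes p :: "'a pmf" and g :: "'a \<Rightarrow> real"
  assumes fin: "finite (set_pmf p)" and l: "l \<ge> 0"
  shows "measure_pmf.prob p {x. g x > e} \<le> measure_pmf.expectation p (\<lambda>x. exp (l * (g x - e)))"
proof -
  have "measure_pmf.prob p {x. g x > e} = measure_pmf.expectation p (indicator {x. g x > e})"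
    by simp
  also have "\<dots> \<le> measure_pmf.expectation p (\<lambda>x. exp (l * (g x - e)))"
  proof (rule integral_mono)
    show "integrable (measure_pmf p) (indicator {x. g x > e} :: _ \<Rightarrow> real)"
      by (rule integrable_measure_pmf_finite[OF fin])
    show "integrable (measure_pmf p) (\<lambda>x. exp (l * (g x - e)))"
      by (rule integrable_measure_pmf_finite[OF fin])
    fix x
    show "indicator {x. g x > e} x \<le> exp (l * (g x - e))"
    proof (cases "g x > e")
      case True
      then have "0 \<le> l * (g x - e)" using l by simp
      then show ?thesis using True by (simp add: indicator_def)
    qed (simp add: indicator_def)
  qed
  finally show ?thesis .
qed

lemma mgfb_upper:
  fixes p :: "'a pmf" and f :: "'a \<Rightarrow> real"
  assumes m: "mgfb p f s" and s: "s > 0" and e: "e > 0"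
  shows "measure_pmf.prob p {x. f x - measure_pmf.expectation p f > e} \<le> exp (- 2 * e\<^sup>2 / s)"
proof -
  define l where "l = 4 * e / s"
  define \<mu> where "\<mu> = measure_pmf.expectation p f"
  have fin: "finite (set_pmf p)" using m by (simp add: mgfb_def)
  have l0: "l \<ge> 0" using s e by (simp add: l_def)
  have "measure_pmf.prob p {x. f x - \<mu> > e} \<le> measure_pmf.expectation p (\<lambda>x. exp (l * ((f x - \<mu>) - e)))"
    by (rule markov_exp[OF fin l0])
  also have "(\<lambda>x. exp (l * ((f x - \<mu>) - e))) = (\<lambda>x. exp (l * (f x - \<mu>)) * exp (- l * e))"
    by (rule ext) (simp add: exp_add[symmetric] algebra_simps)
  also have "measure_pmf.expectation p (\<lambda>x. exp (l * (f x - \<mu>)) * exp (- l * e)) = measure_pmf.expectation p (\<lambda>x. exp (l * (f x - \<mu>))) * exp (- l * e)"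
    by simp
  also have "\<dots> \<le> exp (l\<^sup>2 * s / 8) * exp (- l * e)"
    using m unfolding mgfb_def \<mu>_def by (intro mult_right_mono) auto
  also have "\<dots> = exp (- 2 * e\<^sup>2 / s)"
    using s by (simp add: exp_add[symmetric] l_def power2_eq_square field_simps)
  finally show ?thesis by (simp add: \<mu>_def)
qed

lemma mgfb_neg: "mgfb p f s \<Longrightarrow> mgfb p (\<lambda>x. - f x) s"
  unfolding mgfb_def
proof (intro conjI allI; (elim conjE)?)
  fix l assume h: "\<forall>l. measure_pmf.expectation p (\<lambda>x. exp (l * (f x - measure_pmf.expectation p f))) \<le> exp (l\<^sup>2 * s / 8)"
  from h[rule_format, of "-l"]
  show "measure_pmf.expectation p (\<lambda>x. exp (l * (- f x - measure_pmf.expectation p (\<lambda>x. - f x)))) \<le> exp (l\<^sup>2 * s / 8)"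
    by (simp add: algebra_simps)
qed

lemma mgfb_tail:
  fixes p :: "'a pmf" and f :: "'a \<Rightarrow> real"
  assumes m: "mgfb p f s" and s: "s > 0" and e: "e > 0"
  shows "measure_pmf.prob p {x. \<bar>f x - measure_pmf.expectation p f\<bar> > e} \<le> 2 * exp (- 2 * e\<^sup>2 / s)"
proof -
  have "{x. \<bar>f x - measure_pmf.expectation p f\<bar> > e} \<subseteq>
     {x. f x - measure_pmf.expectation p f > e} \<union> {x. - f x - measure_pmf.expectation p (\<lambda>x. - f x) > e}"
    by auto
  then have "measure_pmf.prob p {x. \<bar>f x - measure_pmf.expectation p f\<bar> > e} \<le>
     measure_pmf.prob p ({x. f x - measure_pmf.expectation p f > e} \<union> {x. - f x - measure_pmf.expectation p (\<lambda>x. - f x) > e})"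
    by (intro measure_pmf.finite_measure_mono) auto
  also have "\<dots> \<le> measure_pmf.prob p {x. f x - measure_pmf.expectation p f > e} +
        measure_pmf.prob p {x. - f x - measure_pmf.expectation p (\<lambda>x. - f x) > e}"
    by (rule measure_Un_le) auto
  also have "\<dots> \<le> exp (- 2 * e\<^sup>2 / s) + exp (- 2 * e\<^sup>2 / s)"
    by (intro add_mono mgfb_upper[OF m s e] mgfb_upper[OF mgfb_neg[OF m] s e])
  finally show ?thesis by simp
qed



lemma dm_set_finite: "finite {size M | M. M \<subseteq># G \<and> directed_matching M}"
proof -
  have "{size M | M. M \<subseteq># G \<and> directed_matching M} \<subseteq> {0..size G}"
    by (auto simp: size_mset_mono)
  then show ?thesis by (rule finite_subset) simp
qed

lemma dm_empty: "directed_matching {#}"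
  by (simp add: directed_matching_def)

lemma dm_sub: "directed_matching M \<Longrightarrow> M' \<subseteq># M \<Longrightarrow> directed_matching M'"
  unfolding directed_matching_def
proof (intro allI conjI)
  fix v assume h: "\<forall>v. size (filter_mset (\<lambda>e. fst e = v) M) \<le> 1 \<and> size (filter_mset (\<lambda>e. snd e = v) M) \<le> 1"
    and sub: "M' \<subseteq># M"
  have a: "size (filter_mset (\<lambda>e. fst e = v) M) \<le> 1" and b: "size (filter_mset (\<lambda>e. snd e = v) M) \<le> 1"
    using h by auto
  have "size (filter_mset (\<lambda>e. fst e = v) M') \<le> size (filter_mset (\<lambda>e. fst e = v) M)"
    by (intro size_mset_mono multiset_filter_mono sub)
  then show "size (filter_mset (\<lambda>e. fst e = v) M') \<le> 1" using a by simp
  have "size (filter_mset (\<lambda>e. snd e = v) M') \<le> size (filter_mset (\<lambda>e. snd e = v) M)"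
    by (intro size_mset_mono multiset_filter_mono sub)
  then show "size (filter_mset (\<lambda>e. snd e = v) M') \<le> 1" using b by simp
qed

lemma mds_ge: "M \<subseteq># G \<Longrightarrow> directed_matching M \<Longrightarrow> size M \<le> max_dmatching_size G"
  unfolding max_dmatching_size_def
proof (rule Max_ge[OF dm_set_finite])
  assume "M \<subseteq># G" "directed_matching M"
  then show "size M \<in> {size M | M. M \<subseteq># G \<and> directed_matching M}" by blast
qed

lemma mds_obtain:
  obtains M where "M \<subseteq># G" "directed_matching M" "size M = max_dmatching_size G"
proof -
  have z: "0 \<in> {size M | M. M \<subseteq># G \<and> directed_matching M}"
    by (intro CollectI exI[of _ "{#}"]) (simp add: dm_empty)
  have "max_dmatching_size G \<in> {size M | M. M \<subseteq># G \<and> directed_matching M}"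
    unfolding max_dmatching_size_def
    by (rule Max_in[OF dm_set_finite]) (use z in blast)
  then have "\<exists>M. max_dmatching_size G = size M \<and> M \<subseteq># G \<and> directed_matching M"
    by (simp only: mem_Collect_eq)
  then obtain M where "max_dmatching_size G = size M" "M \<subseteq># G" "directed_matching M" by (elim exE conjE)
  then show ?thesis using that by simp
qed

lemma mds_mono: "C \<subseteq># G \<Longrightarrow> max_dmatching_size C \<le> max_dmatching_size G"
proof -
  assume CG: "C \<subseteq># G"
  obtain M where M: "M \<subseteq># C" "directed_matching M" "size M = max_dmatching_size C"
    by (rule mds_obtain)
  have "M \<subseteq># G" using M(1) CG by (rule subset_mset.order_trans)
  from mds_ge[OF this M(2)] M(3) show ?thesis by simp
qed

lemma mds_sub:
  assumes "C \<subseteq># G"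
  shows "max_dmatching_size G \<le> max_dmatching_size C + size (G - C)"
proof -
  obtain M where M: "M \<subseteq># G" "directed_matching M" "size M = max_dmatching_size G"
    by (rule mds_obtain)
  have "M \<inter># C \<subseteq># C" by simp
  moreover have "directed_matching (M \<inter># C)" using dm_sub[OF M(2)] by simp
  ultimately have 1: "size (M \<inter># C) \<le> max_dmatching_size C" by (rule mds_ge)
  have 2: "M - C \<subseteq># G - C" using M(1) by (simp add: subseteq_mset_def diff_le_mono)
  have "(M \<inter># C) + (M - (M \<inter># C)) = M"
    by (rule subset_mset.add_diff_inverse) simp
  then have 3: "M = (M \<inter># C) + (M - C)" by (simp add: diff_intersect_left_idem)
  have "size M = size (M \<inter># C) + size (M - C)" by (subst 3) simp
  also have "\<dots> \<le> max_dmatching_size C + size (G - C)" using 1 size_mset_mono[OF 2] by simp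
  finally show ?thesis using M(3) by simp
qed

lemma mds_diff:
  assumes finX: "finite X" and finY: "finite Y" and ZX: "Z \<subseteq> X" and ZY: "Z \<subseteq> Y"
    and gh: "\<And>z. z \<in> Z \<Longrightarrow> g z = h z"
    and kX: "card (X - Z) \<le> k" and kY: "card (Y - Z) \<le> k"
  shows "\<bar>real (max_dmatching_size (image_mset g (mset_set X))) -
          real (max_dmatching_size (image_mset h (mset_set Y)))\<bar> \<le> real k"
proof -
  define C where "C = image_mset g (mset_set Z)"
  have finZ: "finite Z" using finX ZX finite_subset by blast
  have C2: "C = image_mset h (mset_set Z)" unfolding C_def
  proof (rule image_mset_cong)
    fix z assume "z \<in># mset_set Z"
    then have "z \<in> Z" using finZ by simp
    then show "g z = h z" by (rule gh)
  qed
  have gen: "real (max_dmatching_size C) \<le> real (max_dmatching_size (image_mset g' (mset_set W))) \<and> real (max_dmatching_size (image_mset g' (mset_set W))) \<le> real (max_dmatching_size C) + real k"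
    if W: "finite W" "Z \<subseteq> W" "card (W - Z) \<le> k" and Cg: "C = image_mset g' (mset_set Z)" for W g'
  proof -
    have sub: "mset_set Z \<subseteq># mset_set W" using W finZ by (simp add: msubset_mset_set_iff)
    then have CS: "C \<subseteq># image_mset g' (mset_set W)" unfolding Cg by (rule image_mset_subseteq_mono)
    have "size (image_mset g' (mset_set W) - C) = card W - card Z"
      using CS sub W finZ by (simp add: size_Diff_submset Cg)
    also have "\<dots> = card (W - Z)" using W finZ by (simp add: card_Diff_subset)
    finally have sz: "size (image_mset g' (mset_set W) - C) \<le> k" using W by simp
    show ?thesis using mds_mono[OF CS] mds_sub[OF CS] sz by linarith
  qed
  show ?thesis using gen[OF finX ZX kX C_def] gen[OF finY ZY kY C2] by linarith
qed

lemma dmr_diff: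
  assumes finX: "finite X" and finY: "finite Y" and ZX: "Z \<subseteq> X" and ZY: "Z \<subseteq> Y"
    and gh: "\<And>z. z \<in> Z \<Longrightarrow> g z = h z"
    and kX: "card (X - Z) \<le> k" and kY: "card (Y - Z) \<le> k"
  shows "\<bar>dmatching_ratio n (image_mset g (mset_set X)) - dmatching_ratio n (image_mset h (mset_set Y))\<bar> \<le> real k / real n"
proof -
  have "\<bar>dmatching_ratio n (image_mset g (mset_set X)) - dmatching_ratio n (image_mset h (mset_set Y))\<bar>
    = \<bar>real (max_dmatching_size (image_mset g (mset_set X))) -
          real (max_dmatching_size (image_mset h (mset_set Y)))\<bar> / real n"
    unfolding dmatching_ratio_def by (simp add: diff_divide_distrib[symmetric])
  also have D: "\<bar>real (max_dmatching_size (image_mset g (mset_set X))) -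
          real (max_dmatching_size (image_mset h (mset_set Y)))\<bar> \<le> real k"
    by (rule mds_diff[OF finX finY ZX ZY _ kX kY]) (rule gh)
  then have "\<bar>real (max_dmatching_size (image_mset g (mset_set X))) -
          real (max_dmatching_size (image_mset h (mset_set Y)))\<bar> / real n \<le> real k / real n"
    by (intro divide_right_mono) auto
  finally show ?thesis using D by simp
qed



definition dgraph :: "(nat \<times> nat) set \<Rightarrow> ((nat \<times> nat) \<Rightarrow> (nat \<times> nat)) \<Rightarrow> (nat \<times> nat) multiset" where
  "dgraph T b = image_mset (\<lambda>t. (fst t, fst (b t))) (mset_set T)"

definition BJ :: "'a set \<Rightarrow> 'b set \<Rightarrow> ('a \<Rightarrow> 'b) set" where
  "BJ T H = {f \<in> T \<rightarrow>\<^sub>E H. bij_betw f T H}"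

definition AD :: "'a set \<Rightarrow> 'b set \<Rightarrow> 'a set \<Rightarrow> ('a \<Rightarrow> 'b) \<Rightarrow> ('a \<Rightarrow> 'b) set" where
  "AD T H D g = {b \<in> BJ T H. \<forall>t\<in>D. b t = g t}"

definition sig :: "'a set \<Rightarrow> 'b \<Rightarrow> 'b \<Rightarrow> ('a \<Rightarrow> 'b) \<Rightarrow> ('a \<Rightarrow> 'b)" where
  "sig T v v' b = (\<lambda>x. if x \<in> T then Transposition.transpose v v' (b x) else undefined)"

lemma AD_finite: "finite T \<Longrightarrow> finite H \<Longrightarrow> finite (AD T H D g)"
  unfolding AD_def BJ_def
  by (rule finite_subset[OF _ finite_PiE[of T "\<lambda>_. H"]]) auto

lemma AD_D:
  assumes "b \<in> AD T H D g"
  shows "b \<in> T \<rightarrow>\<^sub>E H" "bij_betw b T H" "\<And>s. s \<in> D \<Longrightarrow> b s = g s"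
  using assms unfolding AD_def BJ_def by auto

lemma AD_I:
  assumes "b \<in> T \<rightarrow>\<^sub>E H" "bij_betw b T H" "\<And>s. s \<in> D \<Longrightarrow> b s = g s"
  shows "b \<in> AD T H D g"
  using assms unfolding AD_def BJ_def by blast

lemma sig_props:
  assumes b: "b \<in> AD T H D g" and bt: "b t = v" and tT: "t \<in> T" and tD: "t \<notin> D" and DT: "D \<subseteq> T"
    and b1: "b1 \<in> AD T H D g" "b1 t = v" and b2: "b2 \<in> AD T H D g" "b2 t = v'"
  shows "sig T v v' b \<in> AD T H D g" "sig T v v' b t = v'"
proof -
  note bPi = AD_D(1)[OF b] and bb = AD_D(2)[OF b] and bD = AD_D(3)[OF b]
  have vH: "v \<in> H" using PiE_mem[OF bPi tT] bt by simp
  have vH': "v' \<in> H" using PiE_mem[OF AD_D(1)[OF b2(1)] tT] b2(2) by simp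
  have inj1: "inj_on b1 T" by (rule bij_betw_imp_inj_on[OF AD_D(2)[OF b1(1)]])
  have inj2: "inj_on b2 T" by (rule bij_betw_imp_inj_on[OF AD_D(2)[OF b2(1)]])
  have tr: "Transposition.transpose v v' y \<in> H" if "y \<in> H" for y
    using that vH vH' by (cases "y = v"; cases "y = v'") simp_all
  have "sig T v v' b \<in> T \<rightarrow>\<^sub>E H"
  proof (rule PiE_I)
    fix x assume "x \<in> T"
    then show "sig T v v' b x \<in> H" using tr PiE_mem[OF bPi] by (simp add: sig_def)
  next
    fix x assume "x \<notin> T"
    then show "sig T v v' b x = undefined" by (simp add: sig_def)
  qed
  moreover have "bij_betw (sig T v v' b) T H"
  proof -
    have "bij_betw (Transposition.transpose v v' \<circ> b) T H"
      by (rule bij_betw_trans[OF bb]) (simp add: vH vH')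
    moreover have "\<And>x. x \<in> T \<Longrightarrow> (Transposition.transpose v v' \<circ> b) x = sig T v v' b x"
      by (simp add: sig_def)
    ultimately show ?thesis using bij_betw_cong by blast
  qed
  moreover have "sig T v v' b s = g s" if s: "s \<in> D" for s
  proof -
    have sT: "s \<in> T" using s DT by blast
    have st: "s \<noteq> t" using s tD by blast
    have gs1: "g s = b1 s" using AD_D(3)[OF b1(1) s] by simp
    have "g s \<noteq> v"
    proof
      assume "g s = v"
      then have "b1 s = b1 t" using gs1 b1(2) by simp
      then show False using inj_onD[OF inj1 _ sT tT] st by blast
    qed
    moreover have "g s \<noteq> v'"
    proof
      assume "g s = v'"
      then have "b2 s = b2 t" using AD_D(3)[OF b2(1) s] b2(2) by simp
      then show False using inj_onD[OF inj2 _ sT tT] st by blast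
    qed
    ultimately show "sig T v v' b s = g s" using bD[OF s] sT by (simp add: sig_def)
  qed
  ultimately show "sig T v v' b \<in> AD T H D g" by (rule AD_I)
  show "sig T v v' b t = v'" using tT bt by (simp add: sig_def)
qed

lemma sig_invol:
  assumes "b \<in> T \<rightarrow>\<^sub>E H"
  shows "sig T v' v (sig T v v' b) = b"
proof
  fix x show "sig T v' v (sig T v v' b) x = b x"
  proof (cases "x \<in> T")
    case True
    have "Transposition.transpose v' v = Transposition.transpose v v'" by (rule transpose_commute)
    then show ?thesis using True by (simp add: sig_def)
  next
    case False
    then show ?thesis using PiE_arb[OF assms False] by (simp add: sig_def)
  qed
qed

lemma sig_dist:
  assumes b: "b \<in> AD T H D g" and finT: "finite T"
  shows "\<bar>dmatching_ratio n (dgraph T b) - dmatching_ratio n (dgraph T (sig T v v' b))\<bar> \<le> 2 / real n"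
proof -
  define Z where "Z = {x\<in>T. b x \<notin> {v, v'}}"
  have inj: "inj_on b T" using b by (auto simp: AD_def BJ_def bij_betw_def)
  have "card (T - Z) \<le> card {v, v'}"
  proof (rule card_inj_on_le)
    show "inj_on b (T - Z)" using inj by (rule inj_on_subset) auto
    show "b ` (T - Z) \<subseteq> {v, v'}" by (auto simp: Z_def)
  qed simp
  also have "\<dots> \<le> 2" by (simp add: card_insert_if)
  finally have c: "card (T - Z) \<le> 2" .
  have "\<bar>dmatching_ratio n (image_mset (\<lambda>t. (fst t, fst (b t))) (mset_set T)) -
        dmatching_ratio n (image_mset (\<lambda>t. (fst t, fst (sig T v v' b t))) (mset_set T))\<bar> \<le> real 2 / real n"
  proof (rule dmr_diff[OF finT finT _ _ _ c c])
    show "Z \<subseteq> T" by (simp add: Z_def)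
    show "Z \<subseteq> T" by (simp add: Z_def)
    fix z assume "z \<in> Z"
    then have "z \<in> T" "b z \<noteq> v" "b z \<noteq> v'" by (auto simp: Z_def)
    then show "(fst z, fst (b z)) = (fst z, fst (sig T v v' b z))" by (simp add: sig_def)
  qed
  then show ?thesis by (simp add: dgraph_def)
qed

lemma AD_base:
  assumes "T \<subseteq> D" "b \<in> AD T H D g" "b' \<in> AD T H D g"
  shows "b = b'"
proof
  fix x show "b x = b' x"
  proof (cases "x \<in> T")
    case True
    then have "x \<in> D" using assms(1) by auto
    then show ?thesis using assms(2,3) by (simp add: AD_def)
  next
    case False
    have "b \<in> T \<rightarrow>\<^sub>E H" "b' \<in> T \<rightarrow>\<^sub>E H" using assms(2,3) by (simp_all add: AD_def BJ_def)
    then show ?thesis using PiE_arb[of b T "\<lambda>_. H" x] PiE_arb[of b' T "\<lambda>_. H" x] False by simp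
  qed
qed

lemma directed_main:
  fixes T :: "(nat \<times> nat) set" and H :: "(nat \<times> nat) set"
  assumes finT: "finite T" and finH: "finite H"
  shows "D \<subseteq> T \<Longrightarrow> AD T H D g \<noteq> {} \<Longrightarrow>
    mgfb (pmf_of_set (AD T H D g)) (\<lambda>b. dmatching_ratio n (dgraph T b)) (real (card (T - D)) * (2 / real n)\<^sup>2)"
proof (induction "card (T - D)" arbitrary: D g)
  case 0
  then have TD: "T \<subseteq> D" using finT by auto
  obtain b0 where b0: "b0 \<in> AD T H D g" using 0 by auto
  have "mgfb (pmf_of_set (AD T H D g)) (\<lambda>b. dmatching_ratio n (dgraph T b)) 0"
    by (rule mgfb_const[where k = "dmatching_ratio n (dgraph T b0)"])
       (use 0 AD_finite[OF finT finH] AD_base[OF TD _ b0] in auto)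
  then show ?case using 0(1)[symmetric] by simp
next
  case (Suc m)
  have "T - D \<noteq> {}" using Suc(2) by (metis card.empty nat.simps(3))
  then obtain t where t: "t \<in> T" "t \<notin> D" by auto
  define F where "F b = dmatching_ratio n (dgraph T b)" for b
  have fib: "{b \<in> AD T H D g. b t = v} = AD T H (insert t D) (g(t := v))" for v
    using t(2) by (auto simp: AD_def)
  have cardm: "m = card (T - insert t D)"
  proof -
    have "T - insert t D = (T - D) - {t}" by auto
    then show ?thesis using Suc(2) t finT by simp
  qed
  have "mgfb (pmf_of_set (AD T H D g)) F (real m * (2 / real n)\<^sup>2 + (2 / real n)\<^sup>2)"
  proof (rule mgfb_partition[where \<phi> = "\<lambda>b. b t"])
    show "finite (AD T H D g)" by (rule AD_finite[OF finT finH])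
    show "AD T H D g \<noteq> {}" by (rule Suc.prems)
    fix v assume v: "v \<in> (\<lambda>b. b t) ` AD T H D g"
    show "mgfb (pmf_of_set {a \<in> AD T H D g. a t = v}) F (real m * (2 / real n)\<^sup>2)"
    proof -
      obtain b where b: "b \<in> AD T H D g" "v = b t" using v by auto
      have ne: "AD T H (insert t D) (g(t := v)) \<noteq> {}" using b fib[of v] by auto
      have "mgfb (pmf_of_set (AD T H (insert t D) (g(t := v)))) (\<lambda>b. dmatching_ratio n (dgraph T b))
              (real (card (T - insert t D)) * (2 / real n)\<^sup>2)"
        by (rule Suc.hyps(1)[OF cardm]) (use Suc.prems t ne in auto)
      then show ?thesis unfolding fib F_def cardm .
    qed
  next
    fix v v' assume v: "v \<in> (\<lambda>b. b t) ` AD T H D g" and v': "v' \<in> (\<lambda>b. b t) ` AD T H D g"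
    obtain b1 where b1: "b1 \<in> AD T H D g" "b1 t = v" using v by auto
    obtain b2 where b2: "b2 \<in> AD T H D g" "b2 t = v'" using v' by auto
    have DT: "D \<subseteq> T" by (rule Suc.prems)
    have bij: "bij_betw (sig T v v') {a \<in> AD T H D g. a t = v} {a \<in> AD T H D g. a t = v'}"
    proof (rule bij_betw_byWitness[where f' = "sig T v' v"])
      show "\<forall>a\<in>{a \<in> AD T H D g. a t = v}. sig T v' v (sig T v v' a) = a"
      proof
        fix a assume "a \<in> {a \<in> AD T H D g. a t = v}"
        then have "a \<in> T \<rightarrow>\<^sub>E H" by (simp add: AD_def BJ_def)
        then show "sig T v' v (sig T v v' a) = a" by (rule sig_invol)
      qed
      show "\<forall>a\<in>{a \<in> AD T H D g. a t = v'}. sig T v v' (sig T v' v a) = a"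
      proof
        fix a assume "a \<in> {a \<in> AD T H D g. a t = v'}"
        then have "a \<in> T \<rightarrow>\<^sub>E H" by (simp add: AD_def BJ_def)
        then show "sig T v v' (sig T v' v a) = a" by (rule sig_invol)
      qed
      show "sig T v v' ` {a \<in> AD T H D g. a t = v} \<subseteq> {a \<in> AD T H D g. a t = v'}"
        using sig_props[OF _ _ t DT b1 b2] by auto
      show "sig T v' v ` {a \<in> AD T H D g. a t = v'} \<subseteq> {a \<in> AD T H D g. a t = v}"
        using sig_props[OF _ _ t DT b2 b1] by auto
    qed
    show "\<exists>\<sigma>. bij_betw \<sigma> {a \<in> AD T H D g. a t = v} {a \<in> AD T H D g. a t = v'} \<and>
             (\<forall>a\<in>{a \<in> AD T H D g. a t = v}. \<bar>F a - F (\<sigma> a)\<bar> \<le> 2 / real n)"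
      using bij sig_dist[OF _ finT] unfolding F_def by blast
  qed
  then show ?case unfolding F_def using Suc(2)[symmetric] by (simp add: algebra_simps)
qed



lemma half_edges_Sigma: "half_edges n d = Sigma {..<n} (\<lambda>k. {..<d k})"
  by (auto simp: half_edges_def)

lemma half_edges_finite: "finite (half_edges n d)"
  by (simp add: half_edges_Sigma)

lemma half_edges_card: "card (half_edges n d) = (\<Sum>k<n. d k)"
  by (simp add: half_edges_Sigma card_SigmaI)

lemma BJ_nonempty:
  assumes "finite T" "finite H" "card T = card H"
  shows "BJ T H \<noteq> {}"
proof -
  obtain h where h: "bij_betw h T H" using finite_same_card_bij[OF assms] by blast
  have "restrict h T \<in> BJ T H"
    unfolding BJ_def using h
    by (auto simp: bij_betw_def inj_on_def image_def)
  then show ?thesis by auto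
qed

lemma sumsq_bound:
  fixes din dout :: "nat \<Rightarrow> nat"
  shows "real (\<Sum>k<n. dout k) \<le> (\<Sum>k<n. real (din k + dout k) ^ 2)"
proof -
  have "real (\<Sum>k<n. dout k) = (\<Sum>k<n. real (dout k))" by simp
  also have "\<dots> \<le> (\<Sum>k<n. real (din k + dout k) ^ 2)"
  proof (rule sum_mono)
    fix k
    have "dout k \<le> din k + dout k" by simp
    also have "din k + dout k \<le> (din k + dout k) ^ 2" by (simp add: power2_eq_square le_square)
    finally have "dout k \<le> (din k + dout k) ^ 2" .
    then have "real (dout k) \<le> real ((din k + dout k) ^ 2)" by linarith
    then show "real (dout k) \<le> real (din k + dout k) ^ 2" by simp
  qed
  finally show ?thesis .
qed

lemma part1:
  fixes n :: nat and din dout :: "nat \<Rightarrow> nat" and \<epsilon> :: real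
  assumes n: "n \<ge> 1" and e: "\<epsilon> > 0" and eq: "(\<Sum>k<n. dout k) = (\<Sum>k<n. din k)"
  shows "measure_pmf.prob (directed_config_model n din dout)
             {G. \<bar>dmatching_ratio n G -
                  measure_pmf.expectation (directed_config_model n din dout) (dmatching_ratio n)\<bar> > \<epsilon>}
           \<le> 2 * exp (- (\<epsilon>^2 * real n ^ 2) / (8 * (\<Sum>k<n. real (din k + dout k) ^ 2)))"
proof -
  define S where "S = (\<Sum>k<n. real (din k + dout k) ^ 2)"
  define T where "T = half_edges n dout"
  define H where "H = half_edges n din"
  have finT: "finite T" and finH: "finite H" by (simp_all add: T_def H_def half_edges_finite)
  have cT: "card T = (\<Sum>k<n. dout k)" by (simp add: T_def half_edges_card)
  have cH: "card H = card T" by (simp add: H_def T_def half_edges_card eq)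
  have S0: "S \<ge> 0" unfolding S_def by (intro sum_nonneg) simp
  show ?thesis
  proof (cases "S = 0")
    case True
    have "measure_pmf.prob (directed_config_model n din dout)
             {G. \<bar>dmatching_ratio n G -
                  measure_pmf.expectation (directed_config_model n din dout) (dmatching_ratio n)\<bar> > \<epsilon>} \<le> 1"
      by (rule measure_pmf.prob_le_1)
    moreover have "2 * exp (- (\<epsilon>^2 * real n ^ 2) / (8 * S)) = 2" using True by simp
    ultimately show ?thesis unfolding S_def by linarith
  next
    case False
    then have Spos: "S > 0" using S0 by simp
    have AD0: "AD T H {} g = BJ T H" for g :: "nat \<times> nat \<Rightarrow> nat \<times> nat" by (simp add: AD_def)
    have ne: "AD T H {} (\<lambda>_. undefined) \<noteq> {}"
      unfolding AD0 by (rule BJ_nonempty[OF finT finH cH[symmetric]])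
    have m1: "mgfb (pmf_of_set (AD T H {} (\<lambda>_. undefined))) (\<lambda>b. dmatching_ratio n (dgraph T b))
           (real (card (T - {})) * (2 / real n)\<^sup>2)"
      by (rule directed_main[OF finT finH _ ne]) simp
    have model: "directed_config_model n din dout = map_pmf (dgraph T) (pmf_of_set (AD T H {} (\<lambda>_. undefined)))"
      by (simp add: directed_config_model_def AD_def BJ_def dgraph_def[abs_def] T_def H_def)
    have m2: "mgfb (directed_config_model n din dout) (dmatching_ratio n) (real (card T) * (2 / real n)\<^sup>2)"
      unfolding model by (rule mgfb_map) (use m1 in \<open>simp add: o_def\<close>)
    have npos: "real n > 0" using n by simp
    have "real (card T) * (2 / real n)\<^sup>2 \<le> 16 * S / (real n)\<^sup>2"
    proof -
      have "real (card T) \<le> S" unfolding cT S_def by (rule sumsq_bound)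
      then have "real (card T) * 4 \<le> 16 * S" using S0 by linarith
      then show ?thesis using npos by (simp add: power_divide divide_right_mono)
    qed
    then have m3: "mgfb (directed_config_model n din dout) (dmatching_ratio n) (16 * S / (real n)\<^sup>2)"
      by (rule mgfb_mono[OF m2])
    have sp: "16 * S / (real n)\<^sup>2 > 0" using Spos npos by simp
    have "measure_pmf.prob (directed_config_model n din dout)
             {G. \<bar>dmatching_ratio n G -
                  measure_pmf.expectation (directed_config_model n din dout) (dmatching_ratio n)\<bar> > \<epsilon>}
          \<le> 2 * exp (- 2 * \<epsilon>\<^sup>2 / (16 * S / (real n)\<^sup>2))"
      by (rule mgfb_tail[OF m3 sp e])
    also have "- 2 * \<epsilon>\<^sup>2 / (16 * S / (real n)\<^sup>2) = - (\<epsilon>^2 * real n ^ 2) / (8 * S)"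
      using Spos npos by (simp add: field_simps power2_eq_square)
    finally show ?thesis unfolding S_def .
  qed
qed



definition ograph :: "(nat \<times> nat) set set \<Rightarrow> ((nat \<times> nat) set \<Rightarrow> nat \<times> nat) \<Rightarrow> (nat \<times> nat) multiset" where
  "ograph P \<omega> = image_mset (oriented_edge \<omega>) (mset_set P)"

definition OD :: "'a set set \<Rightarrow> 'a set set \<Rightarrow> ('a set \<Rightarrow> 'a) \<Rightarrow> ('a set \<Rightarrow> 'a) set" where
  "OD P D w = {\<omega> \<in> orientations P. \<forall>e\<in>D. \<omega> e = w e}"

lemma orientations_D:
  assumes "\<omega> \<in> orientations P"
  shows "\<omega> \<in> P \<rightarrow>\<^sub>E \<Union>P" "\<And>e. e \<in> P \<Longrightarrow> \<omega> e \<in> e"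
  using assms unfolding orientations_def by auto

lemma orientations_I:
  assumes "\<omega> \<in> P \<rightarrow>\<^sub>E \<Union>P" "\<And>e. e \<in> P \<Longrightarrow> \<omega> e \<in> e"
  shows "\<omega> \<in> orientations P"
  using assms unfolding orientations_def by blast

lemma orientations_finite:
  assumes "finite P" "\<And>e. e \<in> P \<Longrightarrow> finite e"
  shows "finite (orientations P)"
proof -
  have "finite (P \<rightarrow>\<^sub>E \<Union>P)" using assms by (intro finite_PiE) auto
  then show ?thesis by (rule finite_subset[rotated]) (auto simp: orientations_def)
qed

lemma orientations_ne:
  assumes "\<And>e. e \<in> P \<Longrightarrow> e \<noteq> {}"
  shows "orientations P \<noteq> {}"
proof -
  define \<omega> where "\<omega> = restrict (\<lambda>e. SOME x. x \<in> e) P"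
  have "\<omega> e \<in> e" if "e \<in> P" for e
    using assms[OF that] that by (simp add: \<omega>_def some_in_eq)
  moreover have "\<omega> \<in> P \<rightarrow>\<^sub>E \<Union>P"
  proof (rule PiE_I)
    fix e assume "e \<in> P" then show "\<omega> e \<in> \<Union>P" using calculation by blast
  next
    fix e assume "e \<notin> P" then show "\<omega> e = undefined" by (simp add: \<omega>_def)
  qed
  ultimately have "\<omega> \<in> orientations P" by (intro orientations_I)
  then show ?thesis by blast
qed

lemma oriented_edge_cong: "\<omega> e = \<omega>' e \<Longrightarrow> oriented_edge \<omega> e = oriented_edge \<omega>' e"
  by (simp add: oriented_edge_def)

lemma orient_main:
  assumes finP: "finite P" and finE: "\<And>e. e \<in> P \<Longrightarrow> finite e"
  shows "D \<subseteq> P \<Longrightarrow> OD P D w \<noteq> {} \<Longrightarrow>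
    mgfb (pmf_of_set (OD P D w)) (\<lambda>\<omega>. dmatching_ratio n (ograph P \<omega>)) (real (card (P - D)) * (1 / real n)\<^sup>2)"
proof (induction "card (P - D)" arbitrary: D w)
  case 0
  then have PD: "P \<subseteq> D" using finP by auto
  obtain \<omega>0 where \<omega>0: "\<omega>0 \<in> OD P D w" using 0 by auto
  have finOD: "finite (OD P D w)"
    by (rule finite_subset[OF _ orientations_finite[OF finP finE]]) (auto simp: OD_def)
  have uniq: "\<omega> = \<omega>0" if "\<omega> \<in> OD P D w" for \<omega>
  proof
    fix e show "\<omega> e = \<omega>0 e"
    proof (cases "e \<in> P")
      case True
      then have "e \<in> D" using PD by auto
      then show ?thesis using that \<omega>0 by (simp add: OD_def)
    next
      case False
      have "\<omega> \<in> P \<rightarrow>\<^sub>E \<Union>P" "\<omega>0 \<in> P \<rightarrow>\<^sub>E \<Union>P" using that \<omega>0 by (auto simp: OD_def orientations_def)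
      then show ?thesis using PiE_arb[of \<omega> P "\<lambda>_. \<Union>P" e] PiE_arb[of \<omega>0 P "\<lambda>_. \<Union>P" e] False by simp
    qed
  qed
  have "mgfb (pmf_of_set (OD P D w)) (\<lambda>\<omega>. dmatching_ratio n (ograph P \<omega>)) 0"
    by (rule mgfb_const[where k = "dmatching_ratio n (ograph P \<omega>0)"])
       (use 0 finOD uniq in auto)
  then show ?case using 0(1)[symmetric] by simp
next
  case (Suc m)
  have "P - D \<noteq> {}" using Suc(2) by (metis card.empty nat.simps(3))
  then obtain e where e: "e \<in> P" "e \<notin> D" by auto
  define F where "F \<omega> = dmatching_ratio n (ograph P \<omega>)" for \<omega>
  have finOD: "finite (OD P D w)"
    by (rule finite_subset[OF _ orientations_finite[OF finP finE]]) (auto simp: OD_def)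
  have fib: "{\<omega> \<in> OD P D w. \<omega> e = x} = OD P (insert e D) (w(e := x))" for x
    using e(2) by (auto simp: OD_def)
  have cardm: "m = card (P - insert e D)"
  proof -
    have "P - insert e D = (P - D) - {e}" by auto
    then show ?thesis using Suc(2) e finP by simp
  qed
  have "mgfb (pmf_of_set (OD P D w)) F (real m * (1 / real n)\<^sup>2 + (1 / real n)\<^sup>2)"
  proof (rule mgfb_partition[where \<phi> = "\<lambda>\<omega>. \<omega> e"])
    show "finite (OD P D w)" by (rule finOD)
    show "OD P D w \<noteq> {}" by (rule Suc.prems)
    fix x assume x: "x \<in> (\<lambda>\<omega>. \<omega> e) ` OD P D w"
    show "mgfb (pmf_of_set {a \<in> OD P D w. a e = x}) F (real m * (1 / real n)\<^sup>2)"
    proof -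
      obtain \<omega> where \<omega>: "\<omega> \<in> OD P D w" "x = \<omega> e" using x by auto
      have ne: "OD P (insert e D) (w(e := x)) \<noteq> {}" using \<omega> fib[of x] by auto
      have "mgfb (pmf_of_set (OD P (insert e D) (w(e := x)))) (\<lambda>\<omega>. dmatching_ratio n (ograph P \<omega>))
              (real (card (P - insert e D)) * (1 / real n)\<^sup>2)"
        by (rule Suc.hyps(1)[OF cardm]) (use Suc.prems e ne in auto)
      then show ?thesis unfolding fib F_def cardm .
    qed
  next
    fix x x' assume x: "x \<in> (\<lambda>\<omega>. \<omega> e) ` OD P D w" and x': "x' \<in> (\<lambda>\<omega>. \<omega> e) ` OD P D w"
    have mov: "\<omega> (e := y') \<in> {a \<in> OD P D w. a e = y'}"
      if \<omega>: "\<omega> \<in> OD P D w" and y': "y' \<in> (\<lambda>\<omega>. \<omega> e) ` OD P D w" for \<omega> y'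
    proof -
      obtain \<omega>2 where \<omega>2: "\<omega>2 \<in> OD P D w" "y' = \<omega>2 e" using y' by auto
      have y'e: "y' \<in> e" using \<omega>2 e(1) orientations_D(2)[of \<omega>2 P e] by (simp add: OD_def)
      have \<omega>o: "\<omega> \<in> orientations P" using \<omega> by (simp add: OD_def)
      have "\<omega> (e := y') \<in> orientations P"
      proof (rule orientations_I)
        show "\<omega> (e := y') \<in> P \<rightarrow>\<^sub>E \<Union> P"
          using orientations_D(1)[OF \<omega>o] e(1) y'e by (auto simp: PiE_iff extensional_def)
        fix e' assume "e' \<in> P" then show "(\<omega> (e := y')) e' \<in> e'"
          using orientations_D(2)[OF \<omega>o] y'e by simp
      qed
      moreover have "\<forall>d\<in>D. (\<omega> (e := y')) d = w d" using \<omega>(1) e(2) by (auto simp: OD_def)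
      ultimately show ?thesis by (simp add: OD_def)
    qed
    have bij: "bij_betw (\<lambda>\<omega>. \<omega> (e := x')) {a \<in> OD P D w. a e = x} {a \<in> OD P D w. a e = x'}"
    proof (rule bij_betw_byWitness[where f' = "\<lambda>\<omega>. \<omega> (e := x)"])
      show "\<forall>a\<in>{a \<in> OD P D w. a e = x}. (a(e := x'))(e := x) = a" by auto
      show "\<forall>a\<in>{a \<in> OD P D w. a e = x'}. (a(e := x))(e := x') = a" by auto
      show "(\<lambda>\<omega>. \<omega> (e := x')) ` {a \<in> OD P D w. a e = x} \<subseteq> {a \<in> OD P D w. a e = x'}"
        using mov[OF _ x'] by blast
      show "(\<lambda>\<omega>. \<omega> (e := x)) ` {a \<in> OD P D w. a e = x'} \<subseteq> {a \<in> OD P D w. a e = x}"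
        using mov[OF _ x] by blast
    qed
    have dist: "\<bar>F \<omega> - F (\<omega> (e := x'))\<bar> \<le> 1 / real n" for \<omega>
    proof -
      have c1: "card (P - (P - {e})) \<le> 1" using e(1) by (simp add: Diff_Diff_Int)
      have "\<bar>dmatching_ratio n (image_mset (oriented_edge \<omega>) (mset_set P)) -
            dmatching_ratio n (image_mset (oriented_edge (\<omega> (e := x'))) (mset_set P))\<bar> \<le> real 1 / real n"
      proof (rule dmr_diff[OF finP finP _ _ _ c1 c1])
        fix z assume "z \<in> P - {e}"
        then show "oriented_edge \<omega> z = oriented_edge (\<omega> (e := x')) z"
          by (intro oriented_edge_cong) simp
      qed auto
      then show ?thesis by (simp add: F_def ograph_def)
    qed
    show "\<exists>\<sigma>. bij_betw \<sigma> {a \<in> OD P D w. a e = x} {a \<in> OD P D w. a e = x'} \<and>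
             (\<forall>a\<in>{a \<in> OD P D w. a e = x}. \<bar>F a - F (\<sigma> a)\<bar> \<le> 1 / real n)"
      using bij dist by blast
  qed
  then show ?case unfolding F_def using Suc(2)[symmetric] by (simp add: algebra_simps)
qed



abbreviation "PM \<equiv> perfect_matchings"

lemma PM_D: "P \<in> PM S \<Longrightarrow> e \<in> P \<Longrightarrow> e \<subseteq> S \<and> card e = 2"
  unfolding perfect_matchings_def by blast

lemma PM_uniq: "P \<in> PM S \<Longrightarrow> e1 \<in> P \<Longrightarrow> e2 \<in> P \<Longrightarrow> z \<in> e1 \<Longrightarrow> z \<in> e2 \<Longrightarrow> e1 = e2"
  unfolding perfect_matchings_def by blast

lemma PM_cover: "P \<in> PM S \<Longrightarrow> z \<in> S \<Longrightarrow> \<exists>e\<in>P. z \<in> e"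
  unfolding perfect_matchings_def by blast

lemma PM_I:
  assumes "\<And>e. e \<in> P \<Longrightarrow> e \<subseteq> S \<and> card e = 2" "\<And>z. z \<in> S \<Longrightarrow> \<exists>e\<in>P. z \<in> e"
    "\<And>e1 e2 z. e1 \<in> P \<Longrightarrow> e2 \<in> P \<Longrightarrow> z \<in> e1 \<Longrightarrow> z \<in> e2 \<Longrightarrow> e1 = e2"
  shows "P \<in> PM S"
  unfolding perfect_matchings_def using assms by blast

lemma PM_sub: "P \<in> PM S \<Longrightarrow> P \<subseteq> Pow S"
  using PM_D by blast

lemma PM_finite: "finite S \<Longrightarrow> finite (PM S)"
proof -
  assume "finite S"
  then have "finite (Pow (Pow S))" by simp
  moreover have "PM S \<subseteq> Pow (Pow S)" using PM_sub by blast
  ultimately show ?thesis using finite_subset by blast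
qed

lemma PM_finite_P: "finite S \<Longrightarrow> P \<in> PM S \<Longrightarrow> finite P"
  using PM_sub[of P S] by (meson finite_Pow_iff finite_subset)

lemma PM_finite_e: "P \<in> PM S \<Longrightarrow> e \<in> P \<Longrightarrow> finite e"
  using PM_D[of P S e] card.infinite by fastforce

lemma PM_ne_e: "P \<in> PM S \<Longrightarrow> e \<in> P \<Longrightarrow> e \<noteq> {}"
  using PM_D[of P S e] by fastforce

lemma PM_card:
  assumes "finite S" "P \<in> PM S"
  shows "card P \<le> card S"
proof (rule card_inj_on_le[where f = "\<lambda>e. SOME z. z \<in> e"])
  have some: "(SOME z. z \<in> e) \<in> e" if "e \<in> P" for e
    using PM_ne_e[OF assms(2) that] by (simp add: some_in_eq)
  show "inj_on (\<lambda>e. SOME z. z \<in> e) P"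
  proof (rule inj_onI)
    fix e1 e2 assume h: "e1 \<in> P" "e2 \<in> P" "(SOME z. z \<in> e1) = (SOME z. z \<in> e2)"
    have a: "(SOME z. z \<in> e1) \<in> e1" by (rule some[OF h(1)])
    have b: "(SOME z. z \<in> e1) \<in> e2" unfolding h(3) by (rule some[OF h(2)])
    show "e1 = e2" by (rule PM_uniq[OF assms(2) h(1,2) a b])
  qed
  show "(\<lambda>e. SOME z. z \<in> e) ` P \<subseteq> S" using some PM_D[OF assms(2)] by blast
qed (use assms in simp)

lemma card_touch:
  assumes P: "P \<in> PM S" and fin: "finite P"
  shows "card {e\<in>P. x \<in> e \<or> y \<in> e} \<le> 2"
proof -
  have one: "card {e\<in>P. z \<in> e} \<le> 1" for z
  proof -
    have f: "finite {e\<in>P. z \<in> e}" using fin by simp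
    have "\<forall>a\<in>{e\<in>P. z \<in> e}. \<forall>b\<in>{e\<in>P. z \<in> e}. a = b"
      using PM_uniq[OF P] by blast
    then show ?thesis using card_le_Suc0_iff_eq[OF f] by simp
  qed
  have "{e\<in>P. x \<in> e \<or> y \<in> e} = {e\<in>P. x \<in> e} \<union> {e\<in>P. y \<in> e}" by auto
  then have "card {e\<in>P. x \<in> e \<or> y \<in> e} \<le> card {e\<in>P. x \<in> e} + card {e\<in>P. y \<in> e}"
    by (simp add: card_Un_le)
  then show ?thesis using one[of x] one[of y] by simp
qed

lemma PM_empty: "{} \<in> PM {}"
  by (rule PM_I) auto

lemma PM_ne: "finite S \<Longrightarrow> even (card S) \<Longrightarrow> PM S \<noteq> {}"
proof (induction "card S" arbitrary: S rule: less_induct)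
  case less
  show ?case
  proof (cases "S = {}")
    case True then show ?thesis using PM_empty by auto
  next
    case False
    then obtain x where x: "x \<in> S" by auto
    have "card S \<noteq> 1"
      using less.prems(2) by auto
    moreover have "card S > 0" using False less.prems(1) by (simp add: card_gt_0_iff)
    ultimately have "card (S - {x}) > 0" using x less.prems(1) by simp
    then have "S - {x} \<noteq> {}" by (simp add: card_gt_0_iff)
    then obtain y where y: "y \<in> S" "y \<noteq> x" by blast
    define S' where "S' = S - {x, y}"
    have finS': "finite S'" using less.prems(1) by (simp add: S'_def)
    have cS': "card S' = card S - 2" using x y less.prems(1) by (simp add: S'_def)
    have "card S \<ge> 2"
    proof -
      have "{x, y} \<subseteq> S" using x y by auto
      then have "card {x, y} \<le> card S" using less.prems(1) by (rule card_mono[rotated])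
      then show ?thesis using y by simp
    qed
    then have lt: "card S' < card S" and ev: "even (card S')" using cS' less.prems(2) by auto
    obtain P' where P': "P' \<in> PM S'" using less.hyps[OF lt finS' ev] by auto
    have "insert {x, y} P' \<in> PM S"
    proof (rule PM_I)
      fix e assume "e \<in> insert {x, y} P'"
      then show "e \<subseteq> S \<and> card e = 2"
        using PM_D[OF P'] x y by (auto simp: S'_def)
    next
      fix z assume "z \<in> S"
      then show "\<exists>e\<in>insert {x, y} P'. z \<in> e"
        using PM_cover[OF P', of z] by (cases "z \<in> {x, y}") (auto simp: S'_def)
    next
      fix e1 e2 z assume "e1 \<in> insert {x, y} P'" "e2 \<in> insert {x, y} P'" "z \<in> e1" "z \<in> e2"
      moreover have nx: "x \<notin> e \<and> y \<notin> e" if "e \<in> P'" for e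
        using PM_D[OF P' that] by (auto simp: S'_def)
      ultimately show "e1 = e2"
        using PM_uniq[OF P', of e1 e2 z] by blast
    qed
    then show ?thesis by blast
  qed
qed



abbreviation "tr x y \<equiv> Transposition.transpose x y"

definition timg :: "'a \<Rightarrow> 'a \<Rightarrow> 'a set set \<Rightarrow> 'a set set" where
  "timg x y P = (\<lambda>e. tr x y ` e) ` P"

definition orho :: "'a \<Rightarrow> 'a \<Rightarrow> 'a set set \<Rightarrow> ('a set \<Rightarrow> 'a) \<Rightarrow> ('a set \<Rightarrow> 'a)" where
  "orho x y P' \<omega> = (\<lambda>e'. if e' \<in> P' then tr x y (\<omega> (tr x y ` e')) else undefined)"

lemma tt_img: "tr x y ` (tr x y ` e) = e"
  by (simp add: image_comp)

lemma mem_timg: "e' \<in> timg x y P \<longleftrightarrow> tr x y ` e' \<in> P"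
proof
  assume "e' \<in> timg x y P"
  then obtain e where "e \<in> P" "e' = tr x y ` e" by (auto simp: timg_def)
  then show "tr x y ` e' \<in> P" by (simp add: tt_img)
next
  assume "tr x y ` e' \<in> P"
  then have "tr x y ` (tr x y ` e') \<in> timg x y P" unfolding timg_def by (rule imageI)
  then show "e' \<in> timg x y P" by (simp add: tt_img)
qed

lemma timg_invol: "timg x y (timg x y P) = P"
  by (auto simp: mem_timg tt_img)

lemma fix_e: "x \<notin> e \<Longrightarrow> y \<notin> e \<Longrightarrow> tr x y ` e = e"
  by (rule transpose_image_eq) simp

lemma timg_PM:
  assumes P: "P \<in> PM S"
  shows "timg x y P \<in> PM (tr x y ` S)"
proof (rule PM_I)
  fix e' assume e': "e' \<in> timg x y P"
  then have e: "tr x y ` e' \<in> P" by (simp add: mem_timg)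
  have "tr x y ` e' \<subseteq> S" using PM_D[OF P e] by simp
  then have "tr x y ` (tr x y ` e') \<subseteq> tr x y ` S" by (rule image_mono)
  then have "e' \<subseteq> tr x y ` S" by (simp add: tt_img)
  moreover have "card e' = 2"
  proof -
    have "card (tr x y ` e') = card e'" by (rule card_image) simp
    then show ?thesis using PM_D[OF P e] by simp
  qed
  ultimately show "e' \<subseteq> tr x y ` S \<and> card e' = 2" by simp
next
  fix z assume "z \<in> tr x y ` S"
  then have "tr x y z \<in> S" by (simp add: in_transpose_image_iff)
  then obtain e where e: "e \<in> P" "tr x y z \<in> e" using PM_cover[OF P] by blast
  have "tr x y ` e \<in> timg x y P" using e(1) by (simp add: timg_def)
  moreover have "z \<in> tr x y ` e" using e(2) by (simp add: in_transpose_image_iff)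
  ultimately show "\<exists>e\<in>timg x y P. z \<in> e" by blast
next
  fix e1 e2 z assume h: "e1 \<in> timg x y P" "e2 \<in> timg x y P" "z \<in> e1" "z \<in> e2"
  have "tr x y z \<in> tr x y ` e1" "tr x y z \<in> tr x y ` e2" using h(3,4) by auto
  moreover have "tr x y ` e1 \<in> P" "tr x y ` e2 \<in> P" using h(1,2) by (simp_all add: mem_timg)
  ultimately have "tr x y ` e1 = tr x y ` e2"
    using PM_uniq[OF P, of "tr x y ` e1" "tr x y ` e2" "tr x y z"] by blast
  then have "tr x y ` (tr x y ` e1) = tr x y ` (tr x y ` e2)" by simp
  then show "e1 = e2" by (simp add: tt_img)
qed

lemma orho_orient:
  assumes \<omega>: "\<omega> \<in> orientations P"
  shows "orho x y (timg x y P) \<omega> \<in> orientations (timg x y P)"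
proof -
  have val: "orho x y (timg x y P) \<omega> e' \<in> e'" if e': "e' \<in> timg x y P" for e'
  proof -
    have e: "tr x y ` e' \<in> P" using e' by (simp add: mem_timg)
    have "\<omega> (tr x y ` e') \<in> tr x y ` e'" by (rule orientations_D(2)[OF \<omega> e])
    then have "tr x y (\<omega> (tr x y ` e')) \<in> tr x y ` (tr x y ` e')" by (rule imageI)
    then show ?thesis using e' by (simp add: orho_def tt_img)
  qed
  show ?thesis
  proof (rule orientations_I)
    show "orho x y (timg x y P) \<omega> \<in> timg x y P \<rightarrow>\<^sub>E \<Union> (timg x y P)"
    proof (rule PiE_I)
      fix e' assume h: "e' \<in> timg x y P" show "orho x y (timg x y P) \<omega> e' \<in> \<Union> (timg x y P)"
        by (rule UnionI[OF h val[OF h]])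
    next
      fix e' assume "e' \<notin> timg x y P" then show "orho x y (timg x y P) \<omega> e' = undefined"
        by (simp add: orho_def)
    qed
  qed (rule val)
qed

lemma orho_invol:
  assumes \<omega>: "\<omega> \<in> orientations P"
  shows "orho x y P (orho x y (timg x y P) \<omega>) = \<omega>"
proof
  fix e show "orho x y P (orho x y (timg x y P) \<omega>) e = \<omega> e"
  proof (cases "e \<in> P")
    case True
    then have "tr x y ` e \<in> timg x y P" by (simp add: mem_timg tt_img)
    then show ?thesis using True by (simp add: orho_def tt_img)
  next
    case False
    have "\<omega> \<in> P \<rightarrow>\<^sub>E \<Union>P" by (rule orientations_D(1)[OF \<omega>])
    then have "\<omega> e = undefined" using PiE_arb[of \<omega> P "\<lambda>_. \<Union>P" e] False by simp
    then show ?thesis using False by (simp add: orho_def)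
  qed
qed

lemma orho_bij:
  "bij_betw (orho x y (timg x y P)) (orientations P) (orientations (timg x y P))"
proof (rule bij_betw_byWitness[where f' = "orho x y P"])
  show "\<forall>a\<in>orientations P. orho x y P (orho x y (timg x y P) a) = a"
  proof
    fix a assume "a \<in> orientations P"
    then show "orho x y P (orho x y (timg x y P) a) = a" by (rule orho_invol)
  qed
  show "\<forall>a\<in>orientations (timg x y P). orho x y (timg x y P) (orho x y P a) = a"
  proof
    fix a assume "a \<in> orientations (timg x y P)"
    from orho_invol[OF this, of x y] show "orho x y (timg x y P) (orho x y P a) = a"
      by (simp add: timg_invol)
  qed
  show "orho x y (timg x y P) ` orientations P \<subseteq> orientations (timg x y P)"
  proof
    fix b assume "b \<in> orho x y (timg x y P) ` orientations P"
    then obtain a where a: "a \<in> orientations P" "b = orho x y (timg x y P) a" by blast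
    show "b \<in> orientations (timg x y P)" unfolding a(2) by (rule orho_orient[OF a(1)])
  qed
  show "orho x y P ` orientations (timg x y P) \<subseteq> orientations P"
  proof
    fix b assume "b \<in> orho x y P ` orientations (timg x y P)"
    then obtain a where a: "a \<in> orientations (timg x y P)" "b = orho x y P a" by blast
    from orho_orient[OF a(1), of x y] show "b \<in> orientations P" using a(2) by (simp add: timg_invol)
  qed
qed

lemma orho_dist:
  assumes finS: "finite S" and P: "P \<in> PM S" and \<omega>: "\<omega> \<in> orientations P"
  shows "\<bar>dmatching_ratio n (ograph P \<omega>) -
          dmatching_ratio n (ograph (timg x y P) (orho x y (timg x y P) \<omega>))\<bar> \<le> 2 / real n"
proof -
  define Z where "Z = {e\<in>P. x \<notin> e \<and> y \<notin> e}"
  have finP: "finite P" by (rule PM_finite_P[OF finS P])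
  have P': "timg x y P \<in> PM (tr x y ` S)" by (rule timg_PM[OF P])
  have finP': "finite (timg x y P)" using finP by (simp add: timg_def)
  have ZP: "Z \<subseteq> P" by (auto simp: Z_def)
  have ZP': "Z \<subseteq> timg x y P"
  proof
    fix e assume "e \<in> Z"
    then have "e \<in> P" "x \<notin> e" "y \<notin> e" by (auto simp: Z_def)
    then show "e \<in> timg x y P" by (simp add: mem_timg fix_e)
  qed
  have c1: "card (P - Z) \<le> 2"
  proof -
    have "P - Z = {e\<in>P. x \<in> e \<or> y \<in> e}" by (auto simp: Z_def)
    then show ?thesis using card_touch[OF P finP] by simp
  qed
  have c2: "card (timg x y P - Z) \<le> 2"
  proof -
    have "timg x y P - Z \<subseteq> {e\<in>timg x y P. x \<in> e \<or> y \<in> e}"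
    proof
      fix e assume e: "e \<in> timg x y P - Z"
      show "e \<in> {e\<in>timg x y P. x \<in> e \<or> y \<in> e}"
      proof (rule ccontr)
        assume "e \<notin> {e\<in>timg x y P. x \<in> e \<or> y \<in> e}"
        then have "x \<notin> e" "y \<notin> e" using e by auto
        then have "e \<in> P" using e by (simp add: mem_timg fix_e)
        then show False using e \<open>x \<notin> e\<close> \<open>y \<notin> e\<close> by (simp add: Z_def)
      qed
    qed
    then have "card (timg x y P - Z) \<le> card {e\<in>timg x y P. x \<in> e \<or> y \<in> e}"
      by (rule card_mono[rotated]) (use finP' in simp)
    then show ?thesis using card_touch[OF P' finP', of x y] by linarith
  qed
  have "\<bar>dmatching_ratio n (image_mset (oriented_edge \<omega>) (mset_set P)) -
        dmatching_ratio n (image_mset (oriented_edge (orho x y (timg x y P) \<omega>)) (mset_set (timg x y P)))\<bar>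
        \<le> real 2 / real n"
  proof (rule dmr_diff[OF finP finP' ZP ZP' _ c1 c2])
    fix z assume z: "z \<in> Z"
    then have zP: "z \<in> P" and nx: "x \<notin> z" "y \<notin> z" by (auto simp: Z_def)
    have zP': "z \<in> timg x y P" using z ZP' by blast
    have wz: "\<omega> z \<in> z" by (rule orientations_D(2)[OF \<omega> zP])
    then have "\<omega> z \<noteq> x" "\<omega> z \<noteq> y" using nx by auto
    then have "orho x y (timg x y P) \<omega> z = \<omega> z"
      using zP' nx by (simp add: orho_def fix_e)
    then show "oriented_edge \<omega> z = oriented_edge (orho x y (timg x y P) \<omega>) z"
      by (intro oriented_edge_cong) simp
  qed
  then show ?thesis by (simp add: ograph_def)
qed

lemma G_dist:
  assumes finS: "finite S" and P: "P \<in> PM S"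
  shows "\<bar>measure_pmf.expectation (pmf_of_set (orientations P)) (\<lambda>\<omega>. dmatching_ratio n (ograph P \<omega>)) -
          measure_pmf.expectation (pmf_of_set (orientations (timg x y P)))
             (\<lambda>\<omega>. dmatching_ratio n (ograph (timg x y P) \<omega>))\<bar> \<le> 2 / real n"
proof (rule coupling_avg[OF orho_bij])
  show "finite (orientations P)"
    by (rule orientations_finite[OF PM_finite_P[OF finS P]]) (rule PM_finite_e[OF P])
  show "orientations P \<noteq> {}" by (rule orientations_ne) (rule PM_ne_e[OF P])
  fix \<omega> assume "\<omega> \<in> orientations P"
  then show "\<bar>dmatching_ratio n (ograph P \<omega>) -
          dmatching_ratio n (ograph (timg x y P) (orho x y (timg x y P) \<omega>))\<bar> \<le> 2 / real n"
    by (rule orho_dist[OF finS P])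
qed



definition MD :: "'a set \<Rightarrow> 'a set set \<Rightarrow> 'a set set set" where
  "MD S Q = {P \<in> PM S. Q \<subseteq> P}"

definition GG :: "nat \<Rightarrow> (nat \<times> nat) set set \<Rightarrow> real" where
  "GG n P = measure_pmf.expectation (pmf_of_set (orientations P)) (\<lambda>\<omega>. dmatching_ratio n (ograph P \<omega>))"

lemma the_edge:
  assumes "P \<in> PM S" "e \<in> P" "a \<in> e"
  shows "(THE e. e \<in> P \<and> a \<in> e) = e"
proof (rule the_equality)
  show "e \<in> P \<and> a \<in> e" using assms by simp
  fix e' assume "e' \<in> P \<and> a \<in> e'"
  then show "e' = e" using PM_uniq[OF assms(1), of e' e a] assms by blast
qed

lemma the_edge_in:
  assumes "P \<in> PM S" "a \<in> S"
  shows "(THE e. e \<in> P \<and> a \<in> e) \<in> P \<and> a \<in> (THE e. e \<in> P \<and> a \<in> e)"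
proof -
  obtain e where e: "e \<in> P" "a \<in> e" using PM_cover[OF assms] by blast
  show ?thesis using the_edge[OF assms(1) e] e by simp
qed

lemma MD_finite: "finite S \<Longrightarrow> finite (MD S Q)"
  using PM_finite[of S] by (rule finite_subset[rotated]) (auto simp: MD_def)

lemma move:
  assumes P: "P \<in> MD S (insert e1 Q)" and e1: "e1 = {a, b1}" and e2: "e2 = {a, b2}"
    and ab: "a \<noteq> b1" "a \<noteq> b2" and bS: "b1 \<in> S" "b2 \<in> S" and bQ: "b1 \<notin> \<Union>Q" "b2 \<notin> \<Union>Q"
  shows "timg b1 b2 P \<in> MD S (insert e2 Q)"
proof -
  have PP: "P \<in> PM S" and QP: "Q \<subseteq> P" and e1P: "e1 \<in> P" using P by (auto simp: MD_def)
  have "tr b1 b2 ` S = S" using bS by (intro transpose_image_eq) simp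
  then have P': "timg b1 b2 P \<in> PM S" using timg_PM[OF PP, of b1 b2] by simp
  have "Q \<subseteq> timg b1 b2 P"
  proof
    fix q assume q: "q \<in> Q"
    then have "b1 \<notin> q" "b2 \<notin> q" using bQ by auto
    then have "tr b1 b2 ` q = q" by (rule fix_e)
    then show "q \<in> timg b1 b2 P" using q QP by (simp add: mem_timg subset_iff)
  qed
  moreover have "e2 \<in> timg b1 b2 P"
  proof -
    have "tr b1 b2 ` e2 = e1" using ab by (simp add: e1 e2)
    then show ?thesis using e1P by (simp add: mem_timg)
  qed
  ultimately show ?thesis using P' by (simp add: MD_def)
qed

lemma match_main:
  assumes finS: "finite S"
  shows "MD S Q \<noteq> {} \<Longrightarrow> mgfb (pmf_of_set (MD S Q)) (GG n) (real (card (S - \<Union>Q)) * (2 / real n)\<^sup>2)"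
proof (induction "card (S - \<Union>Q)" arbitrary: Q rule: less_induct)
  case less
  have finMD: "finite (MD S Q)" by (rule MD_finite[OF finS])
  show ?case
  proof (cases "S - \<Union>Q = {}")
    case True
    obtain P0 where P0: "P0 \<in> MD S Q" using less.prems by auto
    have eqQ: "P = Q" if P: "P \<in> MD S Q" for P
    proof
      show "Q \<subseteq> P" using P by (simp add: MD_def)
      show "P \<subseteq> Q"
      proof
        fix e assume e: "e \<in> P"
        have PP: "P \<in> PM S" and QP: "Q \<subseteq> P" using P by (auto simp: MD_def)
        obtain z where z: "z \<in> e" using PM_ne_e[OF PP e] by auto
        have "z \<in> S" using PM_D[OF PP e] z by auto
        then obtain q where q: "q \<in> Q" "z \<in> q" using True by auto
        have "e = q" using PM_uniq[OF PP e, of q z] q QP z by auto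
        then show "e \<in> Q" using q by simp
      qed
    qed
    have "mgfb (pmf_of_set (MD S Q)) (GG n) 0"
      by (rule mgfb_const[where k = "GG n P0"]) (use finMD less.prems eqQ P0 in auto)
    moreover have "card (S - \<Union>Q) = 0" using True by (simp only: card.empty)
    ultimately show ?thesis by simp
  next
    case False
    then obtain a where a: "a \<in> S" "a \<notin> \<Union>Q" by auto
    define \<phi> where "\<phi> P = (THE e. e \<in> P \<and> a \<in> e)" for P :: "(nat \<times> nat) set set"
    define k where "k = card (S - \<Union>Q)"
    have k1: "k \<ge> 1" using False finS by (simp add: k_def card_gt_0_iff Suc_le_eq)
    have phi_in: "\<phi> P \<in> P \<and> a \<in> \<phi> P" if "P \<in> MD S Q" for P
      using the_edge_in[of P S a] that a(1) by (simp add: MD_def \<phi>_def)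
    have fib: "{P \<in> MD S Q. \<phi> P = e0} = MD S (insert e0 Q)" if e0: "a \<in> e0" for e0
    proof (intro set_eqI iffI)
      fix P assume "P \<in> {P \<in> MD S Q. \<phi> P = e0}"
      then show "P \<in> MD S (insert e0 Q)" using phi_in[of P] by (auto simp: MD_def)
    next
      fix P assume P: "P \<in> MD S (insert e0 Q)"
      then have "P \<in> PM S" "e0 \<in> P" "Q \<subseteq> P" by (auto simp: MD_def)
      then show "P \<in> {P \<in> MD S Q. \<phi> P = e0}"
        using the_edge[of P S e0 a] e0 by (simp add: MD_def \<phi>_def)
    qed
    have sub_ok: "b \<notin> \<Union>Q" if P: "P \<in> MD S Q" and b: "b \<in> \<phi> P" for P b
    proof
      assume "b \<in> \<Union>Q"
      then obtain q where q: "q \<in> Q" "b \<in> q" by auto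
      have PP: "P \<in> PM S" and QP: "Q \<subseteq> P" using P by (auto simp: MD_def)
      have "q = \<phi> P" using PM_uniq[OF PP _ _ q(2) b] q(1) QP phi_in[OF P] by auto
      then show False using phi_in[OF P] q a(2) by auto
    qed
    have "mgfb (pmf_of_set (MD S Q)) (GG n) (real (k - 1) * (2 / real n)\<^sup>2 + (2 / real n)\<^sup>2)"
    proof (rule mgfb_partition[where \<phi> = \<phi>])
      show "finite (MD S Q)" by (rule finMD)
      show "MD S Q \<noteq> {}" by (rule less.prems)
      fix v assume v: "v \<in> \<phi> ` MD S Q"
      then obtain P0 where P0: "P0 \<in> MD S Q" "v = \<phi> P0" by auto
      have av: "a \<in> v" using phi_in[OF P0(1)] P0(2) by simp
      have vS: "v \<subseteq> S" using phi_in[OF P0(1)] P0 PM_D[of P0 S v] by (auto simp: MD_def)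
      have ne: "MD S (insert v Q) \<noteq> {}" using fib[OF av] P0 by auto
      have lt: "card (S - \<Union>(insert v Q)) < card (S - \<Union>Q)"
        by (rule psubset_card_mono) (use finS a av in auto)
      have "mgfb (pmf_of_set (MD S (insert v Q))) (GG n) (real (card (S - \<Union>(insert v Q))) * (2 / real n)\<^sup>2)"
        by (rule less.hyps[OF lt ne])
      moreover have "real (card (S - \<Union>(insert v Q))) * (2 / real n)\<^sup>2 \<le> real (k - 1) * (2 / real n)\<^sup>2"
        using lt by (intro mult_right_mono) (auto simp: k_def)
      ultimately show "mgfb (pmf_of_set {a \<in> MD S Q. \<phi> a = v}) (GG n) (real (k - 1) * (2 / real n)\<^sup>2)"
        unfolding fib[OF av] by (rule mgfb_mono)
    next
      fix v v' assume v: "v \<in> \<phi> ` MD S Q" and v': "v' \<in> \<phi> ` MD S Q"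
      obtain P1 where P1: "P1 \<in> MD S Q" "v = \<phi> P1" using v by auto
      obtain P2 where P2: "P2 \<in> MD S Q" "v' = \<phi> P2" using v' by auto
      have av: "a \<in> v" "v \<in> P1" using phi_in[OF P1(1)] P1(2) by simp_all
      have av': "a \<in> v'" "v' \<in> P2" using phi_in[OF P2(1)] P2(2) by simp_all
      have PP1: "P1 \<in> PM S" using P1 by (simp add: MD_def)
      have PP2: "P2 \<in> PM S" using P2 by (simp add: MD_def)
      have two: "\<exists>b. v = {a, b} \<and> a \<noteq> b \<and> b \<in> S \<and> b \<notin> \<Union>Q"
        if "Pv \<in> MD S Q" "v = \<phi> Pv" "a \<in> v" "v \<in> Pv" for Pv v
      proof -
        have PPv: "Pv \<in> PM S" using that by (simp add: MD_def)
        have c2: "card v = 2" and vS: "v \<subseteq> S" using PM_D[OF PPv that(4)] by auto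
        then obtain x y where xy: "v = {x, y}" "x \<noteq> y" by (auto simp: card_2_iff)
        define b where "b = (if x = a then y else x)"
        have vab: "v = {a, b}" and ab: "a \<noteq> b" using xy that(3) by (auto simp: b_def)
        have "b \<in> v" using vab by simp
        then have bQ: "b \<notin> \<Union>Q" using sub_ok[OF that(1)] that(2) by simp
        have bS: "b \<in> S" using vS \<open>b \<in> v\<close> by (rule subsetD)
        show ?thesis by (rule exI[of _ b]) (intro conjI vab ab bS bQ)
      qed
      from two[OF P1 av] obtain b1 where b1: "v = {a, b1}" "a \<noteq> b1" "b1 \<in> S" "b1 \<notin> \<Union>Q"
        by (elim exE conjE)
      from two[OF P2 av'] obtain b2 where b2: "v' = {a, b2}" "a \<noteq> b2" "b2 \<in> S" "b2 \<notin> \<Union>Q"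
        by (elim exE conjE)
      have tc: "tr b2 b1 = tr b1 b2" by (rule transpose_commute)
      have comm: "timg b2 b1 = timg b1 b2"
        unfolding timg_def tc ..
      have bij: "bij_betw (timg b1 b2) (MD S (insert v Q)) (MD S (insert v' Q))"
      proof (rule bij_betw_byWitness[where f' = "timg b1 b2"])
        show "\<forall>P\<in>MD S (insert v Q). timg b1 b2 (timg b1 b2 P) = P" by (simp add: timg_invol)
        show "\<forall>P\<in>MD S (insert v' Q). timg b1 b2 (timg b1 b2 P) = P" by (simp add: timg_invol)
        show "timg b1 b2 ` MD S (insert v Q) \<subseteq> MD S (insert v' Q)"
        proof (rule image_subsetI)
          fix P assume "P \<in> MD S (insert v Q)"
          then show "timg b1 b2 P \<in> MD S (insert v' Q)"
            by (rule move[OF _ b1(1) b2(1) b1(2) b2(2) b1(3) b2(3) b1(4) b2(4)])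
        qed
        show "timg b1 b2 ` MD S (insert v' Q) \<subseteq> MD S (insert v Q)"
        proof (rule image_subsetI)
          fix P assume "P \<in> MD S (insert v' Q)"
          then have "timg b2 b1 P \<in> MD S (insert v Q)"
            by (rule move[OF _ b2(1) b1(1) b2(2) b1(2) b2(3) b1(3) b2(4) b1(4)])
          then show "timg b1 b2 P \<in> MD S (insert v Q)" unfolding comm .
        qed
      qed
      have dist: "\<bar>GG n P - GG n (timg b1 b2 P)\<bar> \<le> 2 / real n" if "P \<in> MD S (insert v Q)" for P
        using G_dist[OF finS, of P n b1 b2] that by (simp add: GG_def MD_def)
      show "\<exists>\<sigma>. bij_betw \<sigma> {a \<in> MD S Q. \<phi> a = v} {a \<in> MD S Q. \<phi> a = v'} \<and>
             (\<forall>a\<in>{a \<in> MD S Q. \<phi> a = v}. \<bar>GG n a - GG n (\<sigma> a)\<bar> \<le> 2 / real n)"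
        unfolding fib[OF av(1)] fib[OF av'(1)]
        by (rule exI[of _ "timg b1 b2"]) (use bij dist in simp)
    qed
    moreover have "real (k - 1) * (2 / real n)\<^sup>2 + (2 / real n)\<^sup>2 = real k * (2 / real n)\<^sup>2"
      using k1 by (simp add: of_nat_diff algebra_simps)
    ultimately show ?thesis by (simp add: k_def)
  qed
qed



definition SPf :: "(nat \<times> nat) set \<Rightarrow> (nat \<times> nat) multiset pmf" where
  "SPf S = bind_pmf (pmf_of_set (PM S)) (\<lambda>P. map_pmf (ograph P) (pmf_of_set (orientations P)))"

lemma exp_bind:
  fixes f :: "'b \<Rightarrow> real"
  assumes "finite (set_pmf q)" "\<And>x. x \<in> set_pmf q \<Longrightarrow> finite (set_pmf (r x))"
  shows "measure_pmf.expectation (bind_pmf q r) f = measure_pmf.expectation q (\<lambda>x. measure_pmf.expectation (r x) f)"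
  using assms by (subst pmf_expectation_bind[of "set_pmf q"]) (auto simp: exp_pmf_sum)

lemma orient_fin: "finite S \<Longrightarrow> P \<in> PM S \<Longrightarrow> finite (orientations P)"
  by (rule orientations_finite[OF PM_finite_P]) (auto dest: PM_finite_e)

lemma orient_ne: "P \<in> PM S \<Longrightarrow> orientations P \<noteq> {}"
  by (rule orientations_ne) (rule PM_ne_e)

lemma SPf_exp:
  assumes "finite S" "even (card S)"
  shows "measure_pmf.expectation (SPf S) (dmatching_ratio n) = measure_pmf.expectation (pmf_of_set (PM S)) (GG n)"
proof -
  have fin: "finite (PM S)" "PM S \<noteq> {}" using assms PM_finite PM_ne by auto
  have "measure_pmf.expectation (SPf S) (dmatching_ratio n) =
    measure_pmf.expectation (pmf_of_set (PM S))
       (\<lambda>P. measure_pmf.expectation (map_pmf (ograph P) (pmf_of_set (orientations P))) (dmatching_ratio n))"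
    unfolding SPf_def
  proof (rule exp_bind)
    show "finite (set_pmf (pmf_of_set (PM S)))" using fin by simp
    fix P assume "P \<in> set_pmf (pmf_of_set (PM S))"
    then have P: "P \<in> PM S" using fin by simp
    show "finite (set_pmf (map_pmf (ograph P) (pmf_of_set (orientations P))))"
      using orient_fin[OF assms(1) P] orient_ne[OF P] by simp
  qed
  also have "(\<lambda>P. measure_pmf.expectation (map_pmf (ograph P) (pmf_of_set (orientations P))) (dmatching_ratio n)) = GG n"
    by (rule ext) (simp add: GG_def integral_map_pmf)
  finally show ?thesis .
qed

lemma levelS:
  assumes finS: "finite S" and ev: "even (card S)"
  shows "mgfb (SPf S) (dmatching_ratio n) (real (card S) * (1 / real n)\<^sup>2 + real (card S) * (2 / real n)\<^sup>2)"
  unfolding SPf_def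
proof (rule mgfb_bind)
  have fin: "finite (PM S)" "PM S \<noteq> {}" using finS ev PM_finite PM_ne by auto
  show "finite (set_pmf (pmf_of_set (PM S)))" using fin by simp
  fix P assume "P \<in> set_pmf (pmf_of_set (PM S))"
  then have P: "P \<in> PM S" using fin by simp
  have od: "OD P {} (\<lambda>_. undefined) = orientations P" by (simp add: OD_def)
  have "mgfb (pmf_of_set (OD P {} (\<lambda>_. undefined))) (\<lambda>\<omega>. dmatching_ratio n (ograph P \<omega>))
          (real (card (P - {})) * (1 / real n)\<^sup>2)"
  proof -
    have finE: "\<And>e. e \<in> P \<Longrightarrow> finite e" by (rule PM_finite_e[OF P])
    have odne: "OD P {} (\<lambda>_. undefined) \<noteq> {}" using od orient_ne[OF P] by simp
    show ?thesis by (rule orient_main[OF PM_finite_P[OF finS P] finE empty_subsetI odne])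
  qed
  then have "mgfb (pmf_of_set (orientations P)) (dmatching_ratio n \<circ> ograph P) (real (card P) * (1 / real n)\<^sup>2)"
    unfolding od by (simp add: o_def)
  moreover have "real (card P) * (1 / real n)\<^sup>2 \<le> real (card S) * (1 / real n)\<^sup>2"
    using PM_card[OF finS P] by (intro mult_right_mono) auto
  ultimately have "mgfb (pmf_of_set (orientations P)) (dmatching_ratio n \<circ> ograph P) (real (card S) * (1 / real n)\<^sup>2)"
    by (rule mgfb_mono)
  then show "mgfb (map_pmf (ograph P) (pmf_of_set (orientations P))) (dmatching_ratio n) (real (card S) * (1 / real n)\<^sup>2)"
    by (rule mgfb_map)
next
  have md: "MD S {} = PM S" by (simp add: MD_def)
  have fin: "finite (PM S)" "PM S \<noteq> {}" using finS ev PM_finite PM_ne by auto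
  have "mgfb (pmf_of_set (MD S {})) (GG n) (real (card (S - \<Union>{})) * (2 / real n)\<^sup>2)"
    by (rule match_main[OF finS]) (use fin md in simp)
  moreover have "(\<lambda>P. measure_pmf.expectation (map_pmf (ograph P) (pmf_of_set (orientations P))) (dmatching_ratio n)) = GG n"
    by (rule ext) (simp add: GG_def integral_map_pmf)
  ultimately show "mgfb (pmf_of_set (PM S))
     (\<lambda>P. measure_pmf.expectation (map_pmf (ograph P) (pmf_of_set (orientations P))) (dmatching_ratio n))
     (real (card S) * (2 / real n)\<^sup>2)"
    unfolding md by simp
qed

lemma trS:
  assumes "h \<in> H" "h' \<in> H"
  shows "tr h h' ` (H - {h}) = H - {h'}"
proof (rule set_eqI)
  fix z
  have "z \<in> tr h h' ` (H - {h}) \<longleftrightarrow> tr h h' z \<in> H - {h}" by (rule in_transpose_image_iff)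
  also have "\<dots> \<longleftrightarrow> z \<in> H - {h'}"
    using assms by (cases "z = h"; cases "z = h'") auto
  finally show "z \<in> tr h h' ` (H - {h}) \<longleftrightarrow> z \<in> H - {h'}" .
qed

lemma discard_coupling:
  assumes finH: "finite H" and odd: "odd (card H)" and h: "h \<in> H" and h': "h' \<in> H"
  shows "\<bar>measure_pmf.expectation (pmf_of_set (PM (H - {h}))) (GG n) -
          measure_pmf.expectation (pmf_of_set (PM (H - {h'}))) (GG n)\<bar> \<le> 2 / real n"
proof (rule coupling_avg)
  have ev: "even (card (H - {h}))" using odd h finH
    by (simp add: card_Diff_singleton)
  show "finite (PM (H - {h}))" using finH by (simp add: PM_finite)
  show "PM (H - {h}) \<noteq> {}" using finH ev by (simp add: PM_ne)
  have t1: "tr h h' ` (H - {h}) = H - {h'}" by (rule trS[OF h h'])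
  have t2: "tr h h' ` (H - {h'}) = H - {h}"
  proof -
    have "tr h h' = tr h' h" by (rule transpose_commute)
    then show ?thesis using trS[OF h' h] by simp
  qed
  show "bij_betw (timg h h') (PM (H - {h})) (PM (H - {h'}))"
  proof (rule bij_betw_byWitness[where f' = "timg h h'"])
    show "\<forall>a\<in>PM (H - {h}). timg h h' (timg h h' a) = a" by (simp add: timg_invol)
    show "\<forall>a\<in>PM (H - {h'}). timg h h' (timg h h' a) = a" by (simp add: timg_invol)
    show "timg h h' ` PM (H - {h}) \<subseteq> PM (H - {h'})"
    proof (rule image_subsetI)
      fix P assume "P \<in> PM (H - {h})"
      from timg_PM[OF this, of h h'] show "timg h h' P \<in> PM (H - {h'})" unfolding t1 .
    qed
    show "timg h h' ` PM (H - {h'}) \<subseteq> PM (H - {h})"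
    proof (rule image_subsetI)
      fix P assume "P \<in> PM (H - {h'})"
      from timg_PM[OF this, of h h'] show "timg h h' P \<in> PM (H - {h})" unfolding t2 .
    qed
  qed
  fix P assume P: "P \<in> PM (H - {h})"
  show "\<bar>GG n P - GG n (timg h h' P)\<bar> \<le> 2 / real n"
    using G_dist[OF _ P, of n h h'] finH by (simp add: GG_def)
qed



definition Sd :: "(nat \<times> nat) set \<Rightarrow> (nat \<times> nat) set pmf" where
  "Sd H = (if even (card H) then return_pmf H else map_pmf (\<lambda>h. H - {h}) (pmf_of_set H))"

lemma model_eq: "oriented_config_model n d = bind_pmf (Sd (half_edges n d)) SPf"
  by (simp add: oriented_config_model_def SPf_def[abs_def] ograph_def[abs_def] Let_def Sd_def)

lemma Sd_set:
  assumes finH: "finite H" and S: "S \<in> set_pmf (Sd H)"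
  shows "finite S \<and> even (card S) \<and> card S \<le> card H"
proof (cases "even (card H)")
  case True
  then show ?thesis using S finH by (simp add: Sd_def)
next
  case False
  then have ne: "H \<noteq> {}" by auto
  then obtain h where h: "h \<in> H" "S = H - {h}" using S finH False by (auto simp: Sd_def)
  have "card S = card H - 1" using h finH by (simp add: card_Diff_singleton)
  then show ?thesis using False h finH ne by (auto simp: card_gt_0_iff)
qed

lemma Sd_finite:
  assumes finH: "finite H"
  shows "finite (set_pmf (Sd H))"
proof (cases "even (card H)")
  case True then show ?thesis by (simp add: Sd_def)
next
  case False
  then have ne: "H \<noteq> {}" by auto
  then show ?thesis using finH False by (simp add: Sd_def)
qed

lemma part2_mgfb:
  assumes finH: "finite H"
  shows "mgfb (bind_pmf (Sd H) SPf) (dmatching_ratio n)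
     ((real (card H) * (1 / real n)\<^sup>2 + real (card H) * (2 / real n)\<^sup>2) + (2 / real n)\<^sup>2)"
proof (rule mgfb_bind)
  show "finite (set_pmf (Sd H))" by (rule Sd_finite[OF finH])
  fix S assume S: "S \<in> set_pmf (Sd H)"
  from Sd_set[OF finH S] have fS: "finite S" and eS: "even (card S)" and cS: "card S \<le> card H" by auto
  have "mgfb (SPf S) (dmatching_ratio n) (real (card S) * (1 / real n)\<^sup>2 + real (card S) * (2 / real n)\<^sup>2)"
    by (rule levelS[OF fS eS])
  moreover have "real (card S) * (1 / real n)\<^sup>2 + real (card S) * (2 / real n)\<^sup>2 \<le>
     real (card H) * (1 / real n)\<^sup>2 + real (card H) * (2 / real n)\<^sup>2"
    using cS by (intro add_mono mult_right_mono) auto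
  ultimately show "mgfb (SPf S) (dmatching_ratio n) (real (card H) * (1 / real n)\<^sup>2 + real (card H) * (2 / real n)\<^sup>2)"
    by (rule mgfb_mono)
next
  show "mgfb (Sd H) (\<lambda>S. measure_pmf.expectation (SPf S) (dmatching_ratio n)) ((2 / real n)\<^sup>2)"
  proof (rule mgfb_range)
    show "finite (set_pmf (Sd H))" by (rule Sd_finite[OF finH])
    fix S S' assume S: "S \<in> set_pmf (Sd H)" and S': "S' \<in> set_pmf (Sd H)"
    show "measure_pmf.expectation (SPf S) (dmatching_ratio n) - measure_pmf.expectation (SPf S') (dmatching_ratio n) \<le> 2 / real n"
    proof (cases "even (card H)")
      case True
      then have "S = H" "S' = H" using S S' by (simp_all add: Sd_def)
      then show ?thesis by simp
    next
      case False
      then have ne: "H \<noteq> {}" by auto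
      obtain h where h: "h \<in> H" "S = H - {h}" using S finH False ne by (auto simp: Sd_def)
      obtain h' where h': "h' \<in> H" "S' = H - {h'}" using S' finH False ne by (auto simp: Sd_def)
      from Sd_set[OF finH S] have fS: "finite S" and eS: "even (card S)" by auto
      from Sd_set[OF finH S'] have fS': "finite S'" and eS': "even (card S')" by auto
      have "\<bar>measure_pmf.expectation (pmf_of_set (PM (H - {h}))) (GG n) -
          measure_pmf.expectation (pmf_of_set (PM (H - {h'}))) (GG n)\<bar> \<le> 2 / real n"
        by (rule discard_coupling[OF finH False h(1) h'(1)])
      then show ?thesis using SPf_exp[OF fS eS, of n] SPf_exp[OF fS' eS', of n] h(2) h'(2) by simp
    qed
  qed
qed

lemma sumsq_bound2:
  fixes d :: "nat \<Rightarrow> nat"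
  shows "real (\<Sum>k<n. d k) \<le> (\<Sum>k<n. real (d k) ^ 2)"
proof -
  have "real (\<Sum>k<n. d k) = (\<Sum>k<n. real (d k))" by simp
  also have "\<dots> \<le> (\<Sum>k<n. real (d k) ^ 2)"
  proof (rule sum_mono)
    fix k
    have "d k \<le> (d k) ^ 2" by (simp add: power2_eq_square le_square)
    then have "real (d k) \<le> real ((d k) ^ 2)" by linarith
    then show "real (d k) \<le> real (d k) ^ 2" by simp
  qed
  finally show ?thesis .
qed

lemma part2:
  fixes n :: nat and din dout :: "nat \<Rightarrow> nat" and \<epsilon> :: real
  assumes n: "n \<ge> 1" and e: "\<epsilon> > 0"
  shows "measure_pmf.prob (oriented_config_model n (\<lambda>k. din k + dout k))
             {G. \<bar>dmatching_ratio n G -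
                  measure_pmf.expectation (oriented_config_model n (\<lambda>k. din k + dout k)) (dmatching_ratio n)\<bar> > \<epsilon>}
           \<le> 2 * exp (- (\<epsilon>^2 * real n ^ 2) / (32 * (\<Sum>k<n. real (din k + dout k) ^ 2)))"
proof -
  define d where "d = (\<lambda>k. din k + dout k)"
  define S2 where "S2 = (\<Sum>k<n. real (din k + dout k) ^ 2)"
  define H where "H = half_edges n d"
  define M where "M = oriented_config_model n d"
  have finH: "finite H" by (simp add: H_def half_edges_finite)
  have cH: "real (card H) \<le> S2"
    unfolding H_def half_edges_card S2_def using sumsq_bound2[where d = d and n = n] by (simp add: d_def)
  have S0: "S2 \<ge> 0" unfolding S2_def by (intro sum_nonneg) simp
  have goal: "measure_pmf.prob M {G. \<bar>dmatching_ratio n G - measure_pmf.expectation M (dmatching_ratio n)\<bar> > \<epsilon>}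
     \<le> 2 * exp (- (\<epsilon>^2 * real n ^ 2) / (32 * S2))"
  proof (cases "S2 = 0")
    case True
    have "measure_pmf.prob M {G. \<bar>dmatching_ratio n G - measure_pmf.expectation M (dmatching_ratio n)\<bar> > \<epsilon>} \<le> 1"
      by (rule measure_pmf.prob_le_1)
    moreover have "2 * exp (- (\<epsilon>^2 * real n ^ 2) / (32 * S2)) = 2" using True by simp
    ultimately show ?thesis by linarith
  next
    case False
    then have Spos: "S2 > 0" using S0 by simp
    have S1: "S2 \<ge> 1"
    proof -
      define N where "N = (\<Sum>k<n. (din k + dout k) ^ 2)"
      have SN: "S2 = real N" unfolding S2_def N_def by (simp only: of_nat_sum of_nat_power)
      then have "N \<noteq> 0" using Spos by auto
      then have "N \<ge> 1" by simp
      then show ?thesis using SN by simp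
    qed
    have npos: "real n > 0" using n by simp
    have m1: "mgfb M (dmatching_ratio n)
       ((real (card H) * (1 / real n)\<^sup>2 + real (card H) * (2 / real n)\<^sup>2) + (2 / real n)\<^sup>2)"
      unfolding M_def model_eq H_def[symmetric] by (rule part2_mgfb[OF finH])
    have "(real (card H) * (1 / real n)\<^sup>2 + real (card H) * (2 / real n)\<^sup>2) + (2 / real n)\<^sup>2
        = (5 * real (card H) + 4) / (real n)\<^sup>2"
      using npos by (simp add: power_divide field_simps)
    also have "\<dots> \<le> 64 * S2 / (real n)\<^sup>2"
      using cH S1 by (intro divide_right_mono) auto
    finally have m2: "mgfb M (dmatching_ratio n) (64 * S2 / (real n)\<^sup>2)" by (rule mgfb_mono[OF m1])
    have sp: "64 * S2 / (real n)\<^sup>2 > 0" using Spos npos by simp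
    have "measure_pmf.prob M {G. \<bar>dmatching_ratio n G - measure_pmf.expectation M (dmatching_ratio n)\<bar> > \<epsilon>}
          \<le> 2 * exp (- 2 * \<epsilon>\<^sup>2 / (64 * S2 / (real n)\<^sup>2))"
      by (rule mgfb_tail[OF m2 sp e])
    also have "- 2 * \<epsilon>\<^sup>2 / (64 * S2 / (real n)\<^sup>2) = - (\<epsilon>^2 * real n ^ 2) / (32 * S2)"
      using Spos npos by (simp add: field_simps power2_eq_square)
    finally show ?thesis .
  qed
  then show ?thesis unfolding M_def S2_def d_def .
qed

theorem theorem1p1:
  fixes n :: nat and din dout :: "nat \<Rightarrow> nat" and \<epsilon> :: real
  assumes "n \<ge> 1" and "\<epsilon> > 0"
  shows "((\<Sum>k<n. dout k) = (\<Sum>k<n. din k) \<longrightarrow>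
           measure_pmf.prob (directed_config_model n din dout)
             {G. \<bar>dmatching_ratio n G -
                  measure_pmf.expectation (directed_config_model n din dout) (dmatching_ratio n)\<bar> > \<epsilon>}
           \<le> 2 * exp (- (\<epsilon>^2 * real n ^ 2) / (8 * (\<Sum>k<n. real (din k + dout k) ^ 2))))
       \<and>
         measure_pmf.prob (oriented_config_model n (\<lambda>k. din k + dout k))
             {G. \<bar>dmatching_ratio n G -
                  measure_pmf.expectation (oriented_config_model n (\<lambda>k. din k + dout k)) (dmatching_ratio n)\<bar> > \<epsilon>}
           \<le> 2 * exp (- (\<epsilon>^2 * real n ^ 2) / (32 * (\<Sum>k<n. real (din k + dout k) ^ 2)))"
  using part1[OF assms] part2[OF assms] by blast


end
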